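(* Let $g\in\mathcal D$, let $Y_1,Y_2$ be i.i.d. with density $g$, let $k\in\mathbb N$ and define $h:[0,1)^2\to\mathbb R$ by $$h(y_1,y_2):=\sum_{j\in\mathbb Z:|j|\in[k]}\frac{(e_j(-y_1)-g_j)(e_j(y_2)-\overline{g_j})}{|\varphi_j|^2}.$$ Then $h$ is real-valued, bounded, symmetric ($h(y_1,y_2)=h(y_2,y_1)$) and satisfies $\mathbb E[h(Y_1,y_2)]=0$ for all $y_2\in[0,1)$. Moreover, with $\mathsf A:=4\nu_k^4$, $\mathsf B:=3\|g_\bullet\|_{\ell^2}\nu_k^3$, $\mathsf C:=2\|g_\bullet\|_{\ell^2}\nu_k^2$ and $\mathsf D:=\mathsf C$, one has $\sup_{y_1,y_2}|h(y_1,y_2)|\le\mathsf A$, $\sup_{y_2}\mathbb E h^2(Y_1,y_2)\le\mathsf B^2$, $\mathbb E h^2(Y_1,Y_2)\le\mathsf C^2$ and $\sup\{\mathbb E[h(Y_1,Y_2)\zeta(Y_1)\xi(Y_2)]:\mathbb E\zeta^2(Y_1)\le1,\mathbb E\xi^2(Y_2)\le1\}\le\mathsf D$. If in addition $L^2(g)=L^2_{\mathbb R}$, then the last inequality also holds with $\mathsf D:=4\|g_\bullet\|_{\ell^1}m_k^2$.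
   Context: $L^2:=L^2([0,1))$ complex-valued square-integrable functions with $\langle h_1,h_2\rangle=\int_0^1h_1\overline{h_2}$. $e_j(x):=\exp(-\mathrm i2\pi jx)$, $h_j:=\langle h,e_j\rangle$ for $j\in\mathbb Z$; $\|h_\bullet\|_{\ell^p}:=(\sum_{j\in\mathbb Z}|h_j|^p)^{1/p}$. $\mathcal D$ is the set of real-valued probability densities on $[0,1)$ in $L^2$. $\varphi\in\mathcal D$ is a fixed (error) density with $|\varphi_j|>0$ for all $j\in\mathbb Z$. $[k]:=\{1,\dots,k\}$, $\nu_k:=(\sum_{|j|\in[k]}|\varphi_j|^{-4})^{1/4}$, $m_k:=\max_{j\in[k]}|\varphi_j|^{-1}$. For a density $g$, $L^2(g)$ is the set of real-valued Borel functions $u$ on $[0,1)$ with $\int_0^1u^2g<\infty$, and $L^2_{\mathbb R}:=L^2(\mathbb 1_{[0,1)})$. The suprema over $\zeta,\xi$ range over real Borel functions. *)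

theory Defs
  imports "HOL-Analysis.Analysis"
begin

definition M01 :: "real measure" where
  "M01 = restrict_space lborel {0..<1}"

definition ej :: "int \<Rightarrow> real \<Rightarrow> complex" where
  "ej j x = cis (- 2 * pi * real_of_int j * x)"

definition fcoef :: "(real \<Rightarrow> real) \<Rightarrow> int \<Rightarrow> complex" where
  "fcoef h j = (LINT x|M01. complex_of_real (h x) * cnj (ej j x))"

definition dens :: "(real \<Rightarrow> real) \<Rightarrow> bool" where
  "dens g \<longleftrightarrow> g \<in> borel_measurable M01 \<and> (\<forall>x\<in>{0..<1}. 0 \<le> g x)
     \<and> integrable M01 g \<and> integral\<^sup>L M01 g = 1 \<and> integrable M01 (\<lambda>x. (g x)\<^sup>2)"

definition Jk :: "nat \<Rightarrow> int set" where
  "Jk k = {j. 1 \<le> \<bar>j\<bar> \<and> \<bar>j\<bar> \<le> int k}"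

definition nuk :: "(real \<Rightarrow> real) \<Rightarrow> nat \<Rightarrow> real" where
  "nuk \<phi> k = root 4 (\<Sum>j\<in>Jk k. 1 / (cmod (fcoef \<phi> j)) ^ 4)"

definition mk :: "(real \<Rightarrow> real) \<Rightarrow> nat \<Rightarrow> real" where
  "mk \<phi> k = Max ((\<lambda>j. 1 / cmod (fcoef \<phi> j)) ` {1..int k})"

text \<open>The kernel h (complex-valued a priori).\<close>
definition hk :: "(real \<Rightarrow> real) \<Rightarrow> (real \<Rightarrow> real) \<Rightarrow> nat \<Rightarrow> real \<Rightarrow> real \<Rightarrow> complex" where
  "hk \<phi> g k y1 y2 = (\<Sum>j\<in>Jk k.
      (ej j (- y1) - fcoef g j) * (ej j y2 - cnj (fcoef g j)) / complex_of_real ((cmod (fcoef \<phi> j))\<^sup>2))"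

definition l2norm :: "(real \<Rightarrow> real) \<Rightarrow> real" where
  "l2norm g = sqrt (\<Sum>\<^sub>\<infinity>j::int. (cmod (fcoef g j))\<^sup>2)"

text \<open>l^1 norm of the Fourier coefficients of g, as an extended nonnegative real (may be infinite).\<close>
definition l1norm :: "(real \<Rightarrow> real) \<Rightarrow> ennreal" where
  "l1norm g = (\<Sum>\<^sub>\<infinity>j::int. ennreal (cmod (fcoef g j)))"

definition L2w :: "(real \<Rightarrow> real) \<Rightarrow> (real \<Rightarrow> real) set" where
  "L2w w = {u. u \<in> borel_measurable M01 \<and> integrable M01 (\<lambda>x. (u x)\<^sup>2 * w x)}"

end

theory Submission
  imports Defs
begin

definition EE :: "int \<Rightarrow> real \<Rightarrow> complex" where
  "EE n y = cis (2 * pi * real_of_int n * y)"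

lemma space_M01[simp]: "space M01 = {0..<1}"
  by (simp add: M01_def)


lemma emeasure_M01_space: "emeasure M01 (space M01) = 1"
proof -
  have "emeasure M01 (space M01) = emeasure lborel {0..<(1::real)}"
    unfolding M01_def by (simp add: emeasure_restrict_space)
  then show ?thesis by simp
qed

lemma measure_M01_space: "measure M01 (space M01) = 1"
  using emeasure_M01_space by (simp add: measure_def)

interpretation M01: finite_measure M01
proof (rule finite_measureI)
  show "emeasure M01 (space M01) \<noteq> \<infinity>" unfolding emeasure_M01_space by simp
qed

interpretation M01P: pair_sigma_finite M01 M01 ..

lemma meas_M01: "f \<in> borel_measurable borel \<Longrightarrow> f \<in> borel_measurable M01"
  unfolding M01_def
  by (rule measurable_restrict_space1) simp

lemma EE_meas[measurable]: "EE n \<in> borel_measurable M01"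
  unfolding EE_def by (intro meas_M01 borel_measurable_continuous_onI continuous_intros)

lemma ej_neg: "ej n (- y) = EE n y" and cnj_ej: "cnj (ej n y) = EE n y"
  and ej_cnj: "ej n y = cnj (EE n y)"
  by (simp_all add: ej_def EE_def cis_cnj)

lemma EE_norm[simp]: "norm (EE n y) = 1" by (simp add: EE_def)

lemma EE_mult_cnj: "EE j y * cnj (EE l y) = EE (j - l) y"
  by (simp add: EE_def cis_cnj cis_mult algebra_simps)

lemma fcoef_EE: "fcoef f n = (LINT x|M01. of_real (f x) * EE n x)"
  by (simp add: fcoef_def cnj_ej)

lemma int_bdd_M01:
  fixes f :: "real \<Rightarrow> 'b::{banach, second_countable_topology}"
  assumes "f \<in> borel_measurable M01" "\<And>x. x \<in> {0..<1} \<Longrightarrow> norm (f x) \<le> B"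
  shows "integrable M01 f"
  by (rule M01.integrable_const_bound[where B=B]) (use assms in auto)

context
  fixes g :: "real \<Rightarrow> real"
  assumes g: "dens g"
begin

lemma g_meas[measurable]: "g \<in> borel_measurable M01"
  and g_nn: "x \<in> {0..<1} \<Longrightarrow> 0 \<le> g x"
  and g_int: "integrable M01 g"
  and g_one: "integral\<^sup>L M01 g = 1"
  and g2_int: "integrable M01 (\<lambda>x. (g x)\<^sup>2)"
  using g by (auto simp: dens_def)

lemma int_bdd_g:
  fixes f :: "real \<Rightarrow> complex"
  assumes [measurable]: "f \<in> borel_measurable M01" and B: "\<And>x. x \<in> {0..<1} \<Longrightarrow> norm (f x) \<le> B"
  shows "integrable M01 (\<lambda>x. f x * of_real (g x))"
proof (rule Bochner_Integration.integrable_bound[where f="\<lambda>x. B * g x"])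
  show "integrable M01 (\<lambda>x. B * g x)" using g_int by simp
  show "AE x in M01. norm (f x * complex_of_real (g x)) \<le> norm (B * g x)"
  proof (rule AE_I2)
    fix x assume "x \<in> space M01"
    then have x: "x \<in> {0..<1}" by simp
    have "norm (f x * complex_of_real (g x)) = norm (f x) * g x" using g_nn[OF x] by (simp add: norm_mult)
    also have "\<dots> \<le> B * g x" using B[OF x] g_nn[OF x] by (simp add: mult_right_mono)
    also have "\<dots> \<le> norm (B * g x)" by simp
    finally show "norm (f x * complex_of_real (g x)) \<le> norm (B * g x)" .
  qed
qed measurable

lemma int_bdd_g_real:
  fixes f :: "real \<Rightarrow> real"
  assumes [measurable]: "f \<in> borel_measurable M01" and B: "\<And>x. x \<in> {0..<1} \<Longrightarrow> \<bar>f x\<bar> \<le> B"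
  shows "integrable M01 (\<lambda>x. f x * g x)"
proof (rule Bochner_Integration.integrable_bound[where f="\<lambda>x. B * g x"])
  show "integrable M01 (\<lambda>x. B * g x)" using g_int by simp
  show "AE x in M01. norm (f x * g x) \<le> norm (B * g x)"
  proof (rule AE_I2)
    fix x assume "x \<in> space M01"
    then have x: "x \<in> {0..<1}" by simp
    have "norm (f x * g x) = \<bar>f x\<bar> * g x" using g_nn[OF x] by (simp add: abs_mult)
    also have "\<dots> \<le> B * g x" using B[OF x] g_nn[OF x] by (simp add: mult_right_mono)
    also have "\<dots> \<le> norm (B * g x)" by simp
    finally show "norm (f x * g x) \<le> norm (B * g x)" .
  qed
qed measurable

lemma int_EE_g: "integrable M01 (\<lambda>x. EE n x * of_real (g x))"
  by (rule int_bdd_g[where B=1]) auto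

lemma G_alt: "fcoef g n = (LINT x|M01. EE n x * of_real (g x))"
  by (simp add: fcoef_EE mult.commute)

lemma G_le1: "norm (fcoef g n) \<le> 1"
proof -
  have "norm (fcoef g n) \<le> (LINT x|M01. norm (EE n x * of_real (g x)))"
    unfolding G_alt by (rule integral_norm_bound)
  also have "\<dots> = (LINT x|M01. g x)"
    by (rule Bochner_Integration.integral_cong) (auto simp: norm_mult g_nn abs_of_nonneg)
  finally show ?thesis using g_one by simp
qed

lemma G0: "fcoef g 0 = 1"
  using g_one by (simp add: fcoef_EE EE_def)

lemma G_neg: "fcoef g (- n) = cnj (fcoef g n)"
proof -
  have "fcoef g (- n) = (LINT x|M01. cnj (of_real (g x) * EE n x))"
    unfolding fcoef_EE by (rule Bochner_Integration.integral_cong) (auto simp: EE_def cis_cnj)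
  also have "\<dots> = cnj (fcoef g n)" unfolding fcoef_EE by (rule Bochner_Integration.integral_cnj)
  finally show ?thesis .
qed

lemma G_diff: "(LINT x|M01. EE j x * cnj (EE l x) * of_real (g x)) = fcoef g (j - l)"
  by (simp add: G_alt EE_mult_cnj)

end


lemma EE_deriv: "(EE n has_vector_derivative (complex_of_real (2*pi*real_of_int n) * \<i> * EE n x)) (at x within A)"
  unfolding EE_def has_vector_derivative_def
  apply (rule has_derivative_eq_rhs)
   apply (rule has_derivative_cis)
   apply (auto intro!: derivative_eq_intros)
  apply (auto simp: fun_eq_iff scaleR_conv_of_real algebra_simps)
  done

lemma LINT_M01_LBINT:
  fixes f :: "real \<Rightarrow> 'b::{banach, second_countable_topology}"
  shows "(LINT x|M01. f x) = (LBINT x=ereal 0..ereal 1. f x)"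
proof -
  have "(LINT x|M01. f x) = (LBINT x:{0..<1}. f x)"
    unfolding M01_def set_lebesgue_integral_def
    by (rule integral_restrict_space) simp
  also have "\<dots> = (LBINT x=ereal 0..ereal 1. f x)"
    using interval_integral_Ico[of 0 1 f] by simp
  finally show ?thesis .
qed

lemma EE_int: "(LINT x|M01. EE n x) = (if n = 0 then 1 else 0)"
proof (cases "n = 0")
  case True then show ?thesis by (simp add: EE_def measure_M01_space[simplified])
next
  case False
  define c where "c = complex_of_real (2*pi*real_of_int n) * \<i>"
  have c0: "c \<noteq> 0" using False by (simp add: c_def)
  have "(LBINT x=ereal 0..ereal 1. EE n x) = EE n 1 / c - EE n 0 / c"
  proof (rule interval_integral_FTC_finite)
    show "continuous_on {min 0 1..max 0 1} (EE n)"
      unfolding EE_def by (intro continuous_intros)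
    fix x :: real
    have "((\<lambda>x. EE n x / c) has_vector_derivative (c * EE n x / c)) (at x within {min 0 1..max 0 1})"
      using EE_deriv[of n x] unfolding c_def
      by (rule has_vector_derivative_divide)
    then show "((\<lambda>x. EE n x / c) has_vector_derivative EE n x) (at x within {min 0 1..max 0 1})"
      using c0 by simp
  qed
  moreover have "EE n 1 = 1" "EE n 0 = 1"
    using cis_multiple_2pi[of "real_of_int n"] by (simp_all add: EE_def)
  ultimately show ?thesis using False c0 by (simp add: LINT_M01_LBINT)
qed


lemma borel_measurable_cnj'[measurable (raw)]:
  "f \<in> borel_measurable M \<Longrightarrow> (\<lambda>x. cnj (f x)) \<in> borel_measurable M"
  by (rule measurable_compose[OF _ borel_measurable_continuous_onI]) (auto intro!: continuous_intros)

definition TP :: "(int \<Rightarrow> complex) \<Rightarrow> int set \<Rightarrow> real \<Rightarrow> complex" where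
  "TP c F y = (\<Sum>j\<in>F. c j * EE j y)"

lemma TP_meas[measurable]: "TP c F \<in> borel_measurable M01"
  unfolding TP_def by measurable

lemma TP_bdd: "norm (TP c F y) \<le> (\<Sum>j\<in>F. norm (c j))"
  unfolding TP_def by (rule order_trans[OF norm_sum]) (simp add: norm_mult)

lemma int_bdd_w:
  fixes f :: "real \<Rightarrow> complex"
  assumes w: "integrable M01 w" and [measurable]: "f \<in> borel_measurable M01"
    and B: "\<And>x. x \<in> {0..<1} \<Longrightarrow> norm (f x) \<le> B"
  shows "integrable M01 (\<lambda>x. f x * of_real (w x))"
proof (rule Bochner_Integration.integrable_bound[where f="\<lambda>x. B * \<bar>w x\<bar>"])
  show "integrable M01 (\<lambda>x. B * \<bar>w x\<bar>)" using w by simp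
  have [measurable]: "w \<in> borel_measurable M01" using w by auto
  show "(\<lambda>x. f x * complex_of_real (w x)) \<in> borel_measurable M01" by measurable
  show "AE x in M01. norm (f x * complex_of_real (w x)) \<le> norm (B * \<bar>w x\<bar>)"
  proof (rule AE_I2)
    fix x assume "x \<in> space M01"
    then have x: "x \<in> {0..<1}" by simp
    have "norm (f x * complex_of_real (w x)) = norm (f x) * \<bar>w x\<bar>" by (simp add: norm_mult)
    also have "\<dots> \<le> B * \<bar>w x\<bar>" using B[OF x] by (simp add: mult_right_mono)
    also have "\<dots> \<le> norm (B * \<bar>w x\<bar>)" by simp
    finally show "norm (f x * complex_of_real (w x)) \<le> norm (B * \<bar>w x\<bar>)" .
  qed
qed

lemma QF:
  assumes F: "finite F" and w: "integrable M01 w"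
  shows "(LINT y|M01. (cmod (TP c F y))\<^sup>2 * w y)
       = Re (\<Sum>j\<in>F. \<Sum>l\<in>F. c j * cnj (c l) * fcoef w (j - l))"
proof -
  have [measurable]: "w \<in> borel_measurable M01" using w by auto
  have int: "integrable M01 (\<lambda>y. EE j y * cnj (EE l y) * of_real (w y))" for j l
    by (rule int_bdd_w[OF w, where B=1]) (auto simp: norm_mult)
  have "complex_of_real (LINT y|M01. (cmod (TP c F y))\<^sup>2 * w y)
      = (CLINT y|M01. complex_of_real ((cmod (TP c F y))\<^sup>2 * w y))"
    by (rule integral_complex_of_real[symmetric])
  also have "\<dots> = (CLINT y|M01. \<Sum>j\<in>F. \<Sum>l\<in>F. (c j * cnj (c l)) * (EE j y * cnj (EE l y) * of_real (w y)))"
  proof (rule Bochner_Integration.integral_cong[OF refl])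
    fix y
    have "complex_of_real ((cmod (TP c F y))\<^sup>2) = TP c F y * cnj (TP c F y)"
      using complex_norm_square[of "TP c F y"] by simp
    also have "\<dots> = (\<Sum>j\<in>F. \<Sum>l\<in>F. (c j * cnj (c l)) * (EE j y * cnj (EE l y)))"
      unfolding TP_def cnj_sum sum_product
      by (intro sum.cong refl) (simp add: algebra_simps)
    finally show "complex_of_real ((cmod (TP c F y))\<^sup>2 * w y) =
       (\<Sum>j\<in>F. \<Sum>l\<in>F. (c j * cnj (c l)) * (EE j y * cnj (EE l y) * of_real (w y)))"
      by (simp only: of_real_mult sum_distrib_right) (simp add: algebra_simps)
  qed
  also have "\<dots> = (\<Sum>j\<in>F. \<Sum>l\<in>F. (c j * cnj (c l)) * (CLINT y|M01. EE j y * cnj (EE l y) * of_real (w y)))"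
    using int by (simp add: integral_sum)
  also have "\<dots> = (\<Sum>j\<in>F. \<Sum>l\<in>F. c j * cnj (c l) * fcoef w (j - l))"
    by (simp add: EE_mult_cnj fcoef_EE mult.commute)
  finally show ?thesis by (metis Re_complex_of_real)
qed


lemma amgm: fixes a b :: real shows "a * b \<le> (a\<^sup>2 + b\<^sup>2) / 2"
proof -
  have "0 \<le> (a - b)\<^sup>2" by simp
  then show ?thesis by (simp add: power2_diff field_simps)
qed

lemma mcnj: "z * cnj z = complex_of_real ((cmod z)\<^sup>2)"
  using complex_norm_square[of z] by simp

lemma fcoef_one: "fcoef (\<lambda>_. 1) n = (if n = 0 then 1 else 0)"
  using EE_int[of n] by (simp add: fcoef_EE)

lemma QF_one:
  assumes F: "finite F"
  shows "(LINT y|M01. (cmod (TP c F y))\<^sup>2) = (\<Sum>j\<in>F. (cmod (c j))\<^sup>2)"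
proof -
  have "(LINT y|M01. (cmod (TP c F y))\<^sup>2) = (LINT y|M01. (cmod (TP c F y))\<^sup>2 * 1)" by simp
  also have "\<dots> = Re (\<Sum>j\<in>F. \<Sum>l\<in>F. c j * cnj (c l) * fcoef (\<lambda>_. 1) (j - l))"
    by (rule QF[OF F]) simp
  also have "\<dots> = Re (\<Sum>j\<in>F. c j * cnj (c j))"
    by (simp add: fcoef_one if_distrib[of "\<lambda>x. _ * x"] sum.If_cases F)
  also have "\<dots> = (\<Sum>j\<in>F. (cmod (c j))\<^sup>2)"
    by (simp only: mcnj of_real_sum[symmetric] Re_complex_of_real)
  finally show ?thesis .
qed

context
  fixes g :: "real \<Rightarrow> real"
  assumes g: "dens g"
begin

lemma Bessel:
  assumes F: "finite F"
  shows "(\<Sum>j\<in>F. (cmod (fcoef g j))\<^sup>2) \<le> (LINT x|M01. (g x)\<^sup>2)"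
proof -
  note [measurable] = g_meas[OF g]
  define c where "c j = cnj (fcoef g j)" for j
  define S where "S = (\<Sum>j\<in>F. (cmod (fcoef g j))\<^sup>2)"
  have intTP: "integrable M01 (\<lambda>x. TP c F x * of_real (g x))"
    by (rule int_bdd_g[OF g TP_meas TP_bdd])
  have "complex_of_real S = (\<Sum>j\<in>F. c j * fcoef g j)"
    unfolding S_def c_def of_real_sum
    by (intro sum.cong refl) (subst mult.commute, rule mcnj[symmetric])
  also have "\<dots> = (\<Sum>j\<in>F. c j * (CLINT x|M01. EE j x * of_real (g x)))"
    by (simp add: G_alt[OF g])
  also have "\<dots> = (CLINT x|M01. TP c F x * of_real (g x))"
    unfolding TP_def sum_distrib_right
    by (subst Bochner_Integration.integral_sum) (auto simp: int_EE_g[OF g] mult.assoc)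
  finally have eqS: "complex_of_real S = (CLINT x|M01. TP c F x * of_real (g x))" .
  have "S \<le> cmod (CLINT x|M01. TP c F x * of_real (g x))"
    by (metis eqS norm_of_real abs_ge_self)
  also have "\<dots> \<le> (LINT x|M01. cmod (TP c F x * of_real (g x)))"
    by (rule integral_norm_bound)
  also have "\<dots> \<le> (LINT x|M01. ((g x)\<^sup>2 + (cmod (TP c F x))\<^sup>2) / 2)"
  proof (rule integral_mono)
    show "integrable M01 (\<lambda>x. cmod (TP c F x * complex_of_real (g x)))"
      using intTP by simp
    have "integrable M01 (\<lambda>x. (cmod (TP c F x))\<^sup>2)"
      by (rule int_bdd_M01[where B="(\<Sum>j\<in>F. cmod (c j))\<^sup>2"])
        (auto intro!: power_mono TP_bdd)
    then show "integrable M01 (\<lambda>x. ((g x)\<^sup>2 + (cmod (TP c F x))\<^sup>2) / 2)"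
      using g2_int[OF g] by simp
    fix x assume "x \<in> space M01"
    have "cmod (TP c F x) * \<bar>g x\<bar> \<le> ((g x)\<^sup>2 + (cmod (TP c F x))\<^sup>2) / 2"
      using amgm[of "cmod (TP c F x)" "\<bar>g x\<bar>"] by (simp add: add.commute)
    then show "cmod (TP c F x * complex_of_real (g x)) \<le> ((g x)\<^sup>2 + (cmod (TP c F x))\<^sup>2) / 2"
      by (simp add: norm_mult)
  qed
  also have "\<dots> = ((LINT x|M01. (g x)\<^sup>2) + (LINT x|M01. (cmod (TP c F x))\<^sup>2)) / 2"
  proof -
    have "integrable M01 (\<lambda>x. (cmod (TP c F x))\<^sup>2)"
      by (rule int_bdd_M01[where B="(\<Sum>j\<in>F. cmod (c j))\<^sup>2"])
        (auto intro!: power_mono TP_bdd)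
    then show ?thesis using g2_int[OF g] by simp
  qed
  also have "(LINT x|M01. (cmod (TP c F x))\<^sup>2) = S"
    by (simp add: QF_one[OF F] S_def c_def)
  finally show ?thesis unfolding S_def by simp
qed

end


lemma prod_int:
  fixes f1 f2 :: "real \<Rightarrow> 'a::{real_normed_field, banach, second_countable_topology}"
  assumes i1: "integrable M01 f1" and i2: "integrable M01 f2"
  shows "integrable (M01 \<Otimes>\<^sub>M M01) (\<lambda>z. f1 (fst z) * f2 (snd z))"
    and "(LINT z|(M01 \<Otimes>\<^sub>M M01). f1 (fst z) * f2 (snd z)) = (LINT x|M01. f1 x) * (LINT x|M01. f2 x)"
proof -
  have [measurable]: "f1 \<in> borel_measurable M01" "f2 \<in> borel_measurable M01" using i1 i2 by auto
  show int: "integrable (M01 \<Otimes>\<^sub>M M01) (\<lambda>z. f1 (fst z) * f2 (snd z))"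
  proof (rule M01P.Fubini_integrable)
    show "(\<lambda>z. f1 (fst z) * f2 (snd z)) \<in> borel_measurable (M01 \<Otimes>\<^sub>M M01)" by measurable
    have "integrable M01 (\<lambda>x. norm (f1 x) * (LINT y|M01. norm (f2 y)))"
      using i1 by (intro integrable_mult_left) simp
    then show "integrable M01 (\<lambda>x. LINT y|M01. norm (f1 (fst (x, y)) * f2 (snd (x, y))))"
      by (simp add: norm_mult)
    show "AE x in M01. integrable M01 (\<lambda>y. f1 (fst (x, y)) * f2 (snd (x, y)))"
      using i2 by simp
  qed
  have "(LINT z|(M01 \<Otimes>\<^sub>M M01). f1 (fst z) * f2 (snd z))
      = (LINT x|M01. LINT y|M01. f1 (fst (x, y)) * f2 (snd (x, y)))"
    by (rule M01P.integral_fst'[OF int, symmetric])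
  also have "\<dots> = (LINT x|M01. f1 x * (LINT y|M01. f2 y))" by simp
  also have "\<dots> = (LINT x|M01. f1 x) * (LINT x|M01. f2 x)" by simp
  finally show "(LINT z|(M01 \<Otimes>\<^sub>M M01). f1 (fst z) * f2 (snd z)) = (LINT x|M01. f1 x) * (LINT x|M01. f2 x)" .
qed


context
  fixes g :: "real \<Rightarrow> real"
  assumes g: "dens g"
begin

lemma variance:
  fixes P :: "real \<Rightarrow> complex"
  assumes [measurable]: "P \<in> borel_measurable M01" and B: "\<And>x. x \<in> {0..<1} \<Longrightarrow> norm (P x) \<le> B"
  defines "K \<equiv> (CLINT y|M01. P y * of_real (g y))"
  shows "(LINT y|M01. (cmod (P y - K))\<^sup>2 * g y) \<le> (LINT y|M01. (cmod (P y))\<^sup>2 * g y)"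
proof -
  note [measurable] = g_meas[OF g]
  have "cmod (P 0) \<le> B" by (rule B) simp
  then have B0: "0 \<le> B" by (rule order_trans[OF norm_ge_zero])
  have i1: "integrable M01 (\<lambda>y. (P y * cnj (P y)) * of_real (g y))"
    by (rule int_bdd_g[OF g, where B="B*B"]) (auto simp: norm_mult intro!: mult_mono B B0)
  have i2: "integrable M01 (\<lambda>y. P y * of_real (g y))"
    by (rule int_bdd_g[OF g, where B="B"]) (auto intro!: B)
  have i3: "integrable M01 (\<lambda>y. cnj (P y) * of_real (g y))"
    by (rule int_bdd_g[OF g, where B="B"]) (auto intro!: B)
  have i4: "integrable M01 (\<lambda>y. complex_of_real (g y))"
    using g_int[OF g] by simp
  have i5: "integrable M01 (\<lambda>y. (cmod (P y - K))\<^sup>2 * g y)"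
    by (rule int_bdd_g_real[OF g, where B="(B + cmod K)^2"]) 
       (auto intro!: power_mono order_trans[OF norm_triangle_ineq4] B)
  have i6: "integrable M01 (\<lambda>y. (cmod (P y))\<^sup>2 * g y)"
    by (rule int_bdd_g_real[OF g, where B="B^2"]) (auto intro!: power_mono B)
  have e1: "complex_of_real ((cmod (P y - K))\<^sup>2 * g y) =
      (P y * cnj (P y)) * of_real (g y) - cnj K * (P y * of_real (g y))
      - K * (cnj (P y) * of_real (g y)) + (K * cnj K) * of_real (g y)" for y
  proof -
    have "complex_of_real ((cmod (P y - K))\<^sup>2 * g y) = ((P y - K) * cnj (P y - K)) * of_real (g y)"
      by (simp only: of_real_mult mcnj)
    also have "\<dots> = (P y * cnj (P y)) * of_real (g y) - cnj K * (P y * of_real (g y))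
      - K * (cnj (P y) * of_real (g y)) + (K * cnj K) * of_real (g y)"
      by (simp add: algebra_simps)
    finally show ?thesis .
  qed
  have "complex_of_real (LINT y|M01. (cmod (P y - K))\<^sup>2 * g y)
     = (CLINT y|M01. complex_of_real ((cmod (P y - K))\<^sup>2 * g y))"
    by (rule integral_complex_of_real[symmetric])
  also have "\<dots> = (CLINT y|M01. (P y * cnj (P y)) * of_real (g y)) - cnj K * K - K * cnj K
      + K * cnj K * (CLINT y|M01. complex_of_real (g y))"
  proof -
    have "cnj K = (CLINT y|M01. cnj (P y * of_real (g y)))"
      unfolding K_def by (rule Bochner_Integration.integral_cnj[symmetric])
    then have i7: "(CLINT y|M01. cnj (P y) * of_real (g y)) = cnj K" by simp
    show ?thesis
      unfolding e1 using i1 i2 i3 i4 i7 by (simp add: K_def)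
  qed
  also have "(CLINT y|M01. complex_of_real (g y)) = 1"
    using g_one[OF g] by simp
  also have "(CLINT y|M01. (P y * cnj (P y)) * of_real (g y))
      = complex_of_real (LINT y|M01. (cmod (P y))\<^sup>2 * g y)"
    by (simp only: mcnj of_real_mult[symmetric] integral_complex_of_real)
  finally have "complex_of_real (LINT y|M01. (cmod (P y - K))\<^sup>2 * g y)
     = complex_of_real ((LINT y|M01. (cmod (P y))\<^sup>2 * g y) - (cmod K)\<^sup>2)"
    using complex_norm_square[of K] by (simp add: mult.commute)
  then have "(LINT y|M01. (cmod (P y - K))\<^sup>2 * g y) = (LINT y|M01. (cmod (P y))\<^sup>2 * g y) - (cmod K)\<^sup>2"
    using of_real_eq_iff by blast
  then show ?thesis by simp
qed

end


definition xw :: "(real \<Rightarrow> real) \<Rightarrow> int \<Rightarrow> real" where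
  "xw \<phi> j = 1 / (cmod (fcoef \<phi> j))\<^sup>2"

definition aa :: "(real \<Rightarrow> real) \<Rightarrow> int \<Rightarrow> real \<Rightarrow> complex" where
  "aa g j y = EE j y - fcoef g j"

lemma Jk_fin: "finite (Jk k)"
proof -
  have "Jk k \<subseteq> {- int k..int k}" by (auto simp: Jk_def)
  then show ?thesis by (rule finite_subset) simp
qed

lemma Jk_neg: "(- j \<in> Jk k) = (j \<in> Jk k)"
  by (auto simp: Jk_def)

lemma Jk_nz: "j \<in> Jk k \<Longrightarrow> j \<noteq> 0"
  by (auto simp: Jk_def)

lemma sum_Jk_neg: "(\<Sum>j\<in>Jk k. f (- j)) = (\<Sum>j\<in>Jk k. f j)"
proof -
  have "(\<Sum>j\<in>Jk k. f j) = (\<Sum>j\<in>uminus ` Jk k. f j)"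
  proof -
    have "uminus ` Jk k = Jk k" 
      by (auto simp: Jk_neg image_iff intro: exI[of _ "- x" for x]) (metis Jk_neg minus_minus)
    then show ?thesis by simp
  qed
  also have "\<dots> = (\<Sum>j\<in>Jk k. f (- j))"
    by (subst sum.reindex) (auto simp: inj_on_def)
  finally show ?thesis by simp
qed

locale Sett =
  fixes \<phi> g :: "real \<Rightarrow> real" and k :: nat
  assumes phi: "dens \<phi>" and phi_nz: "\<forall>j. fcoef \<phi> j \<noteq> 0" and g: "dens g" and k: "1 \<le> k"
begin

lemma phi_pos: "0 < cmod (fcoef \<phi> j)" using phi_nz by simp

lemma xw_ge1: "1 \<le> xw \<phi> j"
proof -
  have "(cmod (fcoef \<phi> j))\<^sup>2 \<le> 1" using G_le1[OF phi, of j] phi_pos[of j]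
    by (simp add: power_le_one)
  then show ?thesis using phi_pos[of j] by (simp add: xw_def)
qed

lemma xw_pos: "0 < xw \<phi> j" using xw_ge1[of j] by simp

lemma xw_neg: "xw \<phi> (- j) = xw \<phi> j"
  by (simp add: xw_def G_neg[OF phi])

lemma aa_neg: "aa g (- j) y = cnj (aa g j y)"
  by (simp add: aa_def G_neg[OF g] EE_def cis_cnj)

lemma aa_bdd: "cmod (aa g j y) \<le> 2"
proof -
  have "cmod (aa g j y) \<le> cmod (EE j y) + cmod (fcoef g j)"
    unfolding aa_def by (rule norm_triangle_ineq4)
  also have "\<dots> \<le> 2" using G_le1[OF g, of j] by simp
  finally show ?thesis .
qed

lemma aa_meas[measurable]: "aa g j \<in> borel_measurable M01"
  unfolding aa_def by measurable

lemma h_alt: "hk \<phi> g k y1 y2 = (\<Sum>j\<in>Jk k. of_real (xw \<phi> j) * aa g j y1 * cnj (aa g j y2))"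
  unfolding hk_def
proof (intro sum.cong refl)
  fix j
  have "ej j y2 - cnj (fcoef g j) = cnj (aa g j y2)" by (simp add: aa_def ej_cnj)
  moreover have "ej j (- y1) - fcoef g j = aa g j y1" by (simp add: aa_def ej_neg)
  ultimately show "(ej j (- y1) - fcoef g j) * (ej j y2 - cnj (fcoef g j)) /
         complex_of_real ((cmod (fcoef \<phi> j))\<^sup>2) =
         complex_of_real (xw \<phi> j) * aa g j y1 * cnj (aa g j y2)"
    by (simp add: xw_def field_simps)
qed

lemma h_cnj: "cnj (hk \<phi> g k y1 y2) = hk \<phi> g k y1 y2"
proof -
  have "cnj (hk \<phi> g k y1 y2) = (\<Sum>j\<in>Jk k. of_real (xw \<phi> j) * cnj (aa g j y1) * aa g j y2)"
    unfolding h_alt by (simp add: cnj_sum)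
  also have "\<dots> = (\<Sum>j\<in>Jk k. of_real (xw \<phi> (- j)) * aa g (- j) y1 * cnj (aa g (- j) y2))"
    by (simp add: xw_neg aa_neg)
  also have "\<dots> = hk \<phi> g k y1 y2"
    unfolding h_alt by (rule sum_Jk_neg)
  finally show ?thesis .
qed

lemma h_Im: "Im (hk \<phi> g k y1 y2) = 0"
  using h_cnj[of y1 y2] by (metis cnj.sel(2) neg_equal_zero)

lemma h_swap: "hk \<phi> g k y2 y1 = hk \<phi> g k y1 y2"
proof -
  have "hk \<phi> g k y2 y1 = cnj (hk \<phi> g k y1 y2)"
    unfolding h_alt by (simp add: cnj_sum mult.commute mult.left_commute)
  then show ?thesis using h_cnj by simp
qed

lemma h_meas1[measurable]: "(\<lambda>y. hk \<phi> g k y y2) \<in> borel_measurable M01"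
  unfolding h_alt by measurable

lemma h_bdd: "cmod (hk \<phi> g k y1 y2) \<le> 4 * (\<Sum>j\<in>Jk k. xw \<phi> j)"
proof -
  have "cmod (hk \<phi> g k y1 y2) \<le> (\<Sum>j\<in>Jk k. cmod (of_real (xw \<phi> j) * aa g j y1 * cnj (aa g j y2)))"
    unfolding h_alt by (rule norm_sum)
  also have "\<dots> \<le> (\<Sum>j\<in>Jk k. xw \<phi> j * 4)"
  proof (rule sum_mono)
    fix j
    have "cmod (aa g j y1) * cmod (aa g j y2) \<le> 2 * 2"
      using aa_bdd by (intro mult_mono) auto
    then show "cmod (of_real (xw \<phi> j) * aa g j y1 * cnj (aa g j y2)) \<le> xw \<phi> j * 4"
      using xw_pos[of j] by (simp add: norm_mult mult.assoc)
  qed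
  also have "(\<Sum>j\<in>Jk k. xw \<phi> j * 4) = 4 * (\<Sum>j\<in>Jk k. xw \<phi> j)"
    by (simp add: sum_distrib_left mult.commute)
  finally show ?thesis .
qed

definition X2 where "X2 = (\<Sum>j\<in>Jk k. (xw \<phi> j)\<^sup>2)"

lemma X2_nuk: "(nuk \<phi> k) ^ 4 = X2"
proof -
  have "(\<Sum>j\<in>Jk k. 1 / (cmod (fcoef \<phi> j)) ^ 4) = X2"
    unfolding X2_def xw_def by (simp add: power_divide flip: power_mult)
  moreover have "0 \<le> X2" unfolding X2_def by (simp add: sum_nonneg)
  ultimately show ?thesis unfolding nuk_def by (simp add: real_root_pow_pos2)
qed

lemma X2_nn: "0 \<le> X2" unfolding X2_def by (simp add: sum_nonneg)

lemma nuk_nn: "0 \<le> nuk \<phi> k"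
  unfolding nuk_def by (simp add: sum_nonneg)

lemma nuk2: "(nuk \<phi> k)\<^sup>2 = sqrt X2"
proof -
  have "((nuk \<phi> k)\<^sup>2)\<^sup>2 = X2" using X2_nuk by (simp flip: power_mult)
  then show ?thesis using nuk_nn by (metis real_sqrt_abs abs_of_nonneg zero_le_power2)
qed

lemma sum_xw_le: "(\<Sum>j\<in>Jk k. xw \<phi> j) \<le> X2"
  unfolding X2_def
proof (rule sum_mono)
  fix j show "xw \<phi> j \<le> (xw \<phi> j)\<^sup>2" using xw_ge1[of j] by (simp add: power2_eq_square)
qed

end


definition N2 :: "(real \<Rightarrow> real) \<Rightarrow> real" where
  "N2 g = (\<Sum>\<^sub>\<infinity>j::int. (cmod (fcoef g j))\<^sup>2)"

context
  fixes g :: "real \<Rightarrow> real"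
  assumes g: "dens g"
begin

lemma N2_summable: "(\<lambda>j. (cmod (fcoef g j))\<^sup>2) summable_on UNIV"
proof (rule nonneg_bdd_above_summable_on)
  show "bdd_above (sum (\<lambda>j. (cmod (fcoef g j))\<^sup>2) ` {F. F \<subseteq> UNIV \<and> finite F})"
    by (rule bdd_aboveI[where M="LINT x|M01. (g x)\<^sup>2"]) (auto intro: Bessel[OF g])
qed simp

lemma fin_le_N2: "finite F \<Longrightarrow> (\<Sum>j\<in>F. (cmod (fcoef g j))\<^sup>2) \<le> N2 g"
  unfolding N2_def by (rule finite_sum_le_infsum[OF N2_summable]) auto

lemma N2_ge1: "1 \<le> N2 g"
  using fin_le_N2[of "{0}"] by (simp add: G0[OF g])

lemma l2norm_N2: "l2norm g = sqrt (N2 g)"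
  by (simp add: l2norm_def N2_def)

lemma shift_le_N2:
  assumes F: "finite F"
  shows "(\<Sum>l\<in>F. (cmod (fcoef g (j - l)))\<^sup>2) \<le> N2 g"
proof -
  have "(\<Sum>l\<in>F. (cmod (fcoef g (j - l)))\<^sup>2) = (\<Sum>n\<in>(\<lambda>l. j - l) ` F. (cmod (fcoef g n))\<^sup>2)"
    by (subst sum.reindex) (auto simp: inj_on_def)
  also have "\<dots> \<le> N2 g" using F by (intro fin_le_N2) simp
  finally show ?thesis .
qed

lemma QFb:
  assumes F: "finite F"
  shows "(LINT y|M01. (cmod (TP c F y))\<^sup>2 * g y)
       \<le> (\<Sum>j\<in>F. \<Sum>l\<in>F. cmod (c j) * cmod (c l) * cmod (fcoef g (j - l)))"
proof -
  have "(LINT y|M01. (cmod (TP c F y))\<^sup>2 * g y)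
      = Re (\<Sum>j\<in>F. \<Sum>l\<in>F. c j * cnj (c l) * fcoef g (j - l))"
    by (rule QF[OF F g_int[OF g]])
  also have "\<dots> \<le> cmod (\<Sum>j\<in>F. \<Sum>l\<in>F. c j * cnj (c l) * fcoef g (j - l))"
    by (rule complex_Re_le_cmod)
  also have "\<dots> \<le> (\<Sum>j\<in>F. cmod (\<Sum>l\<in>F. c j * cnj (c l) * fcoef g (j - l)))"
    by (rule norm_sum)
  also have "\<dots> \<le> (\<Sum>j\<in>F. \<Sum>l\<in>F. cmod (c j * cnj (c l) * fcoef g (j - l)))"
    by (intro sum_mono norm_sum)
  also have "\<dots> = (\<Sum>j\<in>F. \<Sum>l\<in>F. cmod (c j) * cmod (c l) * cmod (fcoef g (j - l)))"
    by (simp add: norm_mult)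
  finally show ?thesis .
qed

end

context Sett
begin

lemma h_TP: "hk \<phi> g k y1 y2 = TP (\<lambda>j. of_real (xw \<phi> j) * cnj (aa g j y2)) (Jk k) y1
   - (\<Sum>j\<in>Jk k. of_real (xw \<phi> j) * cnj (aa g j y2) * fcoef g j)"
  unfolding h_alt TP_def aa_def[of g _ y1] 
  by (simp add: sum_subtractf[symmetric] algebra_simps)

lemma K_TP: "(CLINT y|M01. TP c (Jk k) y * of_real (g y)) = (\<Sum>j\<in>Jk k. c j * fcoef g j)"
proof -
  have "(CLINT y|M01. TP c (Jk k) y * of_real (g y)) = (CLINT y|M01. \<Sum>j\<in>Jk k. c j * (EE j y * of_real (g y)))"
    unfolding TP_def by (simp add: sum_distrib_right mult.assoc)
  also have "\<dots> = (\<Sum>j\<in>Jk k. c j * fcoef g j)"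
    by (simp add: int_EE_g[OF g] G_alt[OF g])
  finally show ?thesis .
qed

lemma Re_sq: "(Re (hk \<phi> g k y1 y2))\<^sup>2 = (cmod (hk \<phi> g k y1 y2))\<^sup>2"
  using h_Im[of y1 y2] by (simp add: cmod_def)

lemma cs_shift: "(\<Sum>l\<in>Jk k. xw \<phi> l * cmod (fcoef g (j - l))) \<le> sqrt (X2 * N2 g)"
proof -
  have "(\<Sum>l\<in>Jk k. xw \<phi> l * cmod (fcoef g (j - l)))\<^sup>2
     \<le> (\<Sum>l\<in>Jk k. (xw \<phi> l)\<^sup>2) * (\<Sum>l\<in>Jk k. (cmod (fcoef g (j - l)))\<^sup>2)"
    by (rule Cauchy_Schwarz_ineq_sum)
  also have "\<dots> \<le> X2 * N2 g"
    unfolding X2_def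
    by (intro mult_left_mono shift_le_N2[OF g Jk_fin]) (simp add: sum_nonneg)
  finally show ?thesis by (meson real_le_rsqrt)
qed

lemma partB: "(LINT y1|M01. (Re (hk \<phi> g k y1 y2))\<^sup>2 * g y1) \<le> (3 * l2norm g * (nuk \<phi> k) ^ 3)\<^sup>2"
proof -
  note [measurable] = g_meas[OF g]
  define c where "c = (\<lambda>j. of_real (xw \<phi> j) * cnj (aa g j y2))"
  have cb: "cmod (c j) \<le> 2 * xw \<phi> j" for j
    using aa_bdd[of j y2] xw_pos[of j] by (simp add: c_def norm_mult mult.commute)
  have "(LINT y1|M01. (Re (hk \<phi> g k y1 y2))\<^sup>2 * g y1)
      = (LINT y1|M01. (cmod (TP c (Jk k) y1 - (CLINT y|M01. TP c (Jk k) y * of_real (g y))))\<^sup>2 * g y1)"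
    unfolding Re_sq by (simp only: h_TP K_TP c_def)
  also have "\<dots> \<le> (LINT y1|M01. (cmod (TP c (Jk k) y1))\<^sup>2 * g y1)"
    by (rule variance[OF g TP_meas TP_bdd])
  also have "\<dots> \<le> (\<Sum>j\<in>Jk k. \<Sum>l\<in>Jk k. cmod (c j) * cmod (c l) * cmod (fcoef g (j - l)))"
    by (rule QFb[OF g Jk_fin])
  also have "\<dots> \<le> (\<Sum>j\<in>Jk k. \<Sum>l\<in>Jk k. 4 * (xw \<phi> j * (xw \<phi> l * cmod (fcoef g (j - l)))))"
  proof (intro sum_mono)
    fix j l
    have "cmod (c j) * cmod (c l) \<le> (2 * xw \<phi> j) * (2 * xw \<phi> l)"
      using xw_pos[of j] xw_pos[of l] by (intro mult_mono cb) auto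
    then have "cmod (c j) * cmod (c l) * cmod (fcoef g (j - l)) \<le> (2 * xw \<phi> j) * (2 * xw \<phi> l) * cmod (fcoef g (j - l))"
      by (rule mult_right_mono) simp
    then show "cmod (c j) * cmod (c l) * cmod (fcoef g (j - l)) \<le> 4 * (xw \<phi> j * (xw \<phi> l * cmod (fcoef g (j - l))))"
      by (simp add: algebra_simps)
  qed
  also have "\<dots> = 4 * (\<Sum>j\<in>Jk k. xw \<phi> j * (\<Sum>l\<in>Jk k. xw \<phi> l * cmod (fcoef g (j - l))))"
    by (simp add: sum_distrib_left)
  also have "\<dots> \<le> 4 * (\<Sum>j\<in>Jk k. xw \<phi> j * sqrt (X2 * N2 g))"
    using xw_pos by (intro mult_left_mono sum_mono cs_shift) (auto intro: less_imp_le)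
  also have "\<dots> = 4 * (\<Sum>j\<in>Jk k. xw \<phi> j) * sqrt (X2 * N2 g)"
    by (simp add: sum_distrib_right)
  also have "\<dots> \<le> 4 * X2 * sqrt (X2 * N2 g)"
    using sum_xw_le X2_nn N2_ge1[OF g] by (intro mult_right_mono) auto
  also have "\<dots> \<le> 9 * N2 g * (X2 * sqrt X2)"
  proof -
    have n1: "1 \<le> N2 g" by (rule N2_ge1[OF g])
    have s1: "1 \<le> sqrt (N2 g)" using n1 by simp
    have "sqrt (N2 g) * 1 \<le> sqrt (N2 g) * sqrt (N2 g)"
      using s1 by (intro mult_left_mono) auto
    then have "sqrt (N2 g) \<le> N2 g" using n1 by simp
    then have "4 * sqrt (N2 g) \<le> 9 * N2 g" using n1 by linarith
    then have "(4 * sqrt (N2 g)) * (X2 * sqrt X2) \<le> (9 * N2 g) * (X2 * sqrt X2)"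
      using X2_nn by (intro mult_right_mono) auto
    moreover have "4 * X2 * sqrt (X2 * N2 g) = (4 * sqrt (N2 g)) * (X2 * sqrt X2)"
      by (simp only: real_sqrt_mult mult_ac)
    ultimately show ?thesis by (simp only: mult_ac)
  qed
  also have "\<dots> = (3 * l2norm g * (nuk \<phi> k) ^ 3)\<^sup>2"
  proof -
    have "((nuk \<phi> k) ^ 3)\<^sup>2 = (nuk \<phi> k) ^ 4 * (nuk \<phi> k)\<^sup>2" by (simp flip: power_mult power_add)
    then have "((nuk \<phi> k) ^ 3)\<^sup>2 = X2 * sqrt X2" by (simp add: X2_nuk nuk2)
    moreover have "(l2norm g)\<^sup>2 = N2 g" using N2_ge1[OF g] by (simp add: l2norm_N2[OF g])
    ultimately show ?thesis by (simp add: power_mult_distrib)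
  qed
  finally show ?thesis .
qed

end


lemma shift_le_N2':
  assumes g: "dens g" and F: "finite F"
  shows "(\<Sum>j\<in>F. (cmod (fcoef g (j - l)))\<^sup>2) \<le> N2 g"
proof -
  have "(\<Sum>j\<in>F. (cmod (fcoef g (j - l)))\<^sup>2) = (\<Sum>n\<in>(\<lambda>j. j - l) ` F. (cmod (fcoef g n))\<^sup>2)"
    by (subst sum.reindex) (auto simp: inj_on_def)
  also have "\<dots> \<le> N2 g" using F by (intro fin_le_N2[OF g]) simp
  finally show ?thesis .
qed

context Sett
begin

definition Cov where "Cov j l = (CLINT y|M01. aa g j y * cnj (aa g l y) * of_real (g y))"

lemma Cov_eq: "Cov j l = fcoef g (j - l) - fcoef g j * cnj (fcoef g l)"
proof -
  have i1: "integrable M01 (\<lambda>y. EE j y * cnj (EE l y) * of_real (g y))"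
    by (rule int_bdd_g[OF g, where B=1]) (auto simp: norm_mult)
  have i2: "integrable M01 (\<lambda>y. cnj (EE l y) * of_real (g y))"
    by (rule int_bdd_g[OF g, where B=1]) (auto simp: norm_mult)
  have i3: "integrable M01 (\<lambda>y. EE j y * of_real (g y))" by (rule int_EE_g[OF g])
  have i4: "integrable M01 (\<lambda>y. complex_of_real (g y))" using g_int[OF g] by simp
  have e: "aa g j y * cnj (aa g l y) * of_real (g y) =
     EE j y * cnj (EE l y) * of_real (g y) - cnj (fcoef g l) * (EE j y * of_real (g y))
     - fcoef g j * (cnj (EE l y) * of_real (g y)) + fcoef g j * cnj (fcoef g l) * of_real (g y)" for y
    by (simp add: aa_def algebra_simps)
  have c2: "(CLINT y|M01. cnj (EE l y) * of_real (g y)) = cnj (fcoef g l)"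
  proof -
    have "(CLINT y|M01. cnj (EE l y) * of_real (g y)) = (CLINT y|M01. cnj (EE l y * of_real (g y)))" by simp
    also have "\<dots> = cnj (CLINT y|M01. EE l y * of_real (g y))" by (rule Bochner_Integration.integral_cnj)
    finally show ?thesis by (simp add: G_alt[OF g])
  qed
  have "Cov j l = fcoef g (j - l) - cnj (fcoef g l) * fcoef g j - fcoef g j * cnj (fcoef g l)
      + fcoef g j * cnj (fcoef g l) * (CLINT y|M01. complex_of_real (g y))"
    unfolding Cov_def e using i1 i2 i3 i4
    by (simp add: G_diff[OF g] c2 G_alt[OF g, symmetric])
  also have "(CLINT y|M01. complex_of_real (g y)) = 1" using g_one[OF g] by simp
  finally show ?thesis by simp
qed

lemma aa_prod_bdd: "cmod (aa g j y) * cmod (aa g l y') \<le> 4"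
  using mult_mono[OF aa_bdd[of j y] aa_bdd[of l y']] by simp

lemma int_f1: "integrable M01 (\<lambda>y. aa g j y * cnj (aa g l y) * of_real (g y))"
  by (rule int_bdd_g[OF g, where B=4]) (auto simp: norm_mult aa_prod_bdd)

lemma int_f2: "integrable M01 (\<lambda>y. cnj (aa g j y) * aa g l y * of_real (g y))"
  by (rule int_bdd_g[OF g, where B=4]) (auto simp: norm_mult aa_prod_bdd)

lemma int_f2_eq: "(CLINT y|M01. cnj (aa g j y) * aa g l y * of_real (g y)) = cnj (Cov j l)"
proof -
  have "(CLINT y|M01. cnj (aa g j y) * aa g l y * of_real (g y))
     = (CLINT y|M01. cnj (aa g j y * cnj (aa g l y) * of_real (g y)))" by simp
  also have "\<dots> = cnj (Cov j l)" unfolding Cov_def by (rule Bochner_Integration.integral_cnj)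
  finally show ?thesis .
qed

lemma partC_pt: "complex_of_real ((Re (hk \<phi> g k y1 y2))\<^sup>2 * g y1 * g y2)
  = (\<Sum>j\<in>Jk k. \<Sum>l\<in>Jk k. of_real (xw \<phi> j * xw \<phi> l) *
       ((aa g j y1 * cnj (aa g l y1) * of_real (g y1)) * (cnj (aa g j y2) * aa g l y2 * of_real (g y2))))"
proof -
  have "complex_of_real ((Re (hk \<phi> g k y1 y2))\<^sup>2 * g y1 * g y2)
     = (hk \<phi> g k y1 y2 * cnj (hk \<phi> g k y1 y2)) * of_real (g y1) * of_real (g y2)"
    by (simp only: Re_sq of_real_mult mcnj)
  also have "hk \<phi> g k y1 y2 * cnj (hk \<phi> g k y1 y2) = (\<Sum>j\<in>Jk k. \<Sum>l\<in>Jk k. of_real (xw \<phi> j * xw \<phi> l) *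
       ((aa g j y1 * cnj (aa g l y1)) * (cnj (aa g j y2) * aa g l y2)))"
    unfolding h_alt cnj_sum sum_product
    by (intro sum.cong refl) (simp add: algebra_simps)
  also have "(\<Sum>j\<in>Jk k. \<Sum>l\<in>Jk k. of_real (xw \<phi> j * xw \<phi> l) *
       ((aa g j y1 * cnj (aa g l y1)) * (cnj (aa g j y2) * aa g l y2))) * of_real (g y1) * of_real (g y2)
    = (\<Sum>j\<in>Jk k. \<Sum>l\<in>Jk k. of_real (xw \<phi> j * xw \<phi> l) *
       ((aa g j y1 * cnj (aa g l y1) * of_real (g y1)) * (cnj (aa g j y2) * aa g l y2 * of_real (g y2))))"
    unfolding sum_distrib_right
    by (intro sum.cong refl) (simp add: algebra_simps)
  finally show ?thesis .
qed

lemma partC_int: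
  "integrable (M01 \<Otimes>\<^sub>M M01) (\<lambda>z. (Re (hk \<phi> g k (fst z) (snd z)))\<^sup>2 * g (fst z) * g (snd z))"
  and partC_val:
  "(LINT z|(M01 \<Otimes>\<^sub>M M01). (Re (hk \<phi> g k (fst z) (snd z)))\<^sup>2 * g (fst z) * g (snd z))
     = (\<Sum>j\<in>Jk k. \<Sum>l\<in>Jk k. xw \<phi> j * xw \<phi> l * (cmod (Cov j l))\<^sup>2)"
proof -
  let ?F = "\<lambda>z. (Re (hk \<phi> g k (fst z) (snd z)))\<^sup>2 * g (fst z) * g (snd z)"
  let ?T = "\<lambda>j l z. of_real (xw \<phi> j * xw \<phi> l) *
       ((aa g j (fst z) * cnj (aa g l (fst z)) * of_real (g (fst z))) * (cnj (aa g j (snd z)) * aa g l (snd z) * of_real (g (snd z))))"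
  have it: "integrable (M01 \<Otimes>\<^sub>M M01) (?T j l)" for j l
    by (intro integrable_mult_right prod_int(1) int_f1 int_f2)
  have eqF: "(\<lambda>z. complex_of_real (?F z)) = (\<lambda>z. \<Sum>j\<in>Jk k. \<Sum>l\<in>Jk k. ?T j l z)"
    using partC_pt by (simp add: fun_eq_iff)
  have "integrable (M01 \<Otimes>\<^sub>M M01) (\<lambda>z. complex_of_real (?F z))"
    unfolding eqF using it by auto
  then show "integrable (M01 \<Otimes>\<^sub>M M01) ?F" by (rule complex_of_real_integrable_eq[THEN iffD1])
  have "complex_of_real (LINT z|(M01 \<Otimes>\<^sub>M M01). ?F z) = (CLINT z|(M01 \<Otimes>\<^sub>M M01). complex_of_real (?F z))"
    by (rule integral_complex_of_real[symmetric])
  also have "\<dots> = (\<Sum>j\<in>Jk k. \<Sum>l\<in>Jk k. CLINT z|(M01 \<Otimes>\<^sub>M M01). ?T j l z)"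
    unfolding eqF using it by (simp add: Bochner_Integration.integral_sum)
  also have "\<dots> = (\<Sum>j\<in>Jk k. \<Sum>l\<in>Jk k. of_real (xw \<phi> j * xw \<phi> l) * (Cov j l * cnj (Cov j l)))"
    by (simp only: integral_mult_right_zero prod_int(2)[OF int_f1 int_f2] int_f2_eq Cov_def[symmetric])
  also have "\<dots> = complex_of_real (\<Sum>j\<in>Jk k. \<Sum>l\<in>Jk k. xw \<phi> j * xw \<phi> l * (cmod (Cov j l))\<^sup>2)"
    by (simp add: mcnj)
  finally show "(LINT z|(M01 \<Otimes>\<^sub>M M01). ?F z) = (\<Sum>j\<in>Jk k. \<Sum>l\<in>Jk k. xw \<phi> j * xw \<phi> l * (cmod (Cov j l))\<^sup>2)"
    using of_real_eq_iff by blast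
qed

end


context Sett
begin

lemma Cov_sq: "(cmod (Cov j l))\<^sup>2 \<le> 2 * (cmod (fcoef g (j - l)))\<^sup>2 + 2 * ((cmod (fcoef g j))\<^sup>2 * (cmod (fcoef g l))\<^sup>2)"
proof -
  have "cmod (Cov j l) \<le> cmod (fcoef g (j - l)) + cmod (fcoef g j) * cmod (fcoef g l)"
    unfolding Cov_eq by (rule order_trans[OF norm_triangle_ineq4]) (simp add: norm_mult)
  then have "(cmod (Cov j l))\<^sup>2 \<le> (cmod (fcoef g (j - l)) + cmod (fcoef g j) * cmod (fcoef g l))\<^sup>2"
    by (rule power_mono) simp
  also have "\<dots> \<le> 2 * (cmod (fcoef g (j - l)))\<^sup>2 + 2 * (cmod (fcoef g j) * cmod (fcoef g l))\<^sup>2"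
    using amgm[of "cmod (fcoef g (j - l))" "cmod (fcoef g j) * cmod (fcoef g l)"]
    by (simp add: power2_sum)
  finally show ?thesis by (simp add: power_mult_distrib)
qed

lemma sumA: "(\<Sum>j\<in>Jk k. \<Sum>l\<in>Jk k. xw \<phi> j * xw \<phi> l * (cmod (fcoef g (j - l)))\<^sup>2) \<le> X2 * N2 g"
proof -
  let ?G = "\<lambda>j l. (cmod (fcoef g (j - l)))\<^sup>2"
  have "(\<Sum>j\<in>Jk k. \<Sum>l\<in>Jk k. xw \<phi> j * xw \<phi> l * ?G j l)
     \<le> (\<Sum>j\<in>Jk k. \<Sum>l\<in>Jk k. ((xw \<phi> j)\<^sup>2 * ?G j l + (xw \<phi> l)\<^sup>2 * ?G j l) / 2)"
  proof (intro sum_mono)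
    fix j l
    have "xw \<phi> j * xw \<phi> l * ?G j l \<le> (((xw \<phi> j)\<^sup>2 + (xw \<phi> l)\<^sup>2) / 2) * ?G j l"
      by (intro mult_right_mono amgm) simp
    then show "xw \<phi> j * xw \<phi> l * ?G j l \<le> ((xw \<phi> j)\<^sup>2 * ?G j l + (xw \<phi> l)\<^sup>2 * ?G j l) / 2"
      by (simp add: algebra_simps)
  qed
  also have "\<dots> = ((\<Sum>j\<in>Jk k. (xw \<phi> j)\<^sup>2 * (\<Sum>l\<in>Jk k. ?G j l)) + (\<Sum>l\<in>Jk k. (xw \<phi> l)\<^sup>2 * (\<Sum>j\<in>Jk k. ?G j l))) / 2"
  proof -
    have e1: "(\<Sum>j\<in>Jk k. \<Sum>l\<in>Jk k. ((xw \<phi> j)\<^sup>2 * ?G j l + (xw \<phi> l)\<^sup>2 * ?G j l) / 2)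
      = ((\<Sum>j\<in>Jk k. \<Sum>l\<in>Jk k. (xw \<phi> j)\<^sup>2 * ?G j l) + (\<Sum>j\<in>Jk k. \<Sum>l\<in>Jk k. (xw \<phi> l)\<^sup>2 * ?G j l)) / 2"
      by (simp only: sum_divide_distrib[symmetric] sum.distrib)
    have e2: "(\<Sum>j\<in>Jk k. \<Sum>l\<in>Jk k. (xw \<phi> j)\<^sup>2 * ?G j l) = (\<Sum>j\<in>Jk k. (xw \<phi> j)\<^sup>2 * (\<Sum>l\<in>Jk k. ?G j l))"
      by (simp only: sum_distrib_left)
    have e3: "(\<Sum>j\<in>Jk k. \<Sum>l\<in>Jk k. (xw \<phi> l)\<^sup>2 * ?G j l) = (\<Sum>l\<in>Jk k. (xw \<phi> l)\<^sup>2 * (\<Sum>j\<in>Jk k. ?G j l))"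
      by (subst sum.swap) (simp only: sum_distrib_left)
    show ?thesis unfolding e1 e2 e3 ..
  qed
  also have "\<dots> \<le> ((\<Sum>j\<in>Jk k. (xw \<phi> j)\<^sup>2 * N2 g) + (\<Sum>l\<in>Jk k. (xw \<phi> l)\<^sup>2 * N2 g)) / 2"
    by (intro divide_right_mono add_mono sum_mono mult_left_mono shift_le_N2[OF g Jk_fin] shift_le_N2'[OF g Jk_fin]) auto
  also have "\<dots> = X2 * N2 g" by (simp add: X2_def sum_distrib_right)
  finally show ?thesis .
qed

lemma sumB: "(\<Sum>j\<in>Jk k. \<Sum>l\<in>Jk k. xw \<phi> j * xw \<phi> l * ((cmod (fcoef g j))\<^sup>2 * (cmod (fcoef g l))\<^sup>2)) \<le> X2 * N2 g"
proof -
  let ?q = "\<lambda>j. (cmod (fcoef g j))\<^sup>2"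
  have "(\<Sum>j\<in>Jk k. \<Sum>l\<in>Jk k. xw \<phi> j * xw \<phi> l * (?q j * ?q l)) = (\<Sum>j\<in>Jk k. xw \<phi> j * ?q j)\<^sup>2"
    by (simp add: power2_eq_square sum_product algebra_simps)
  also have "\<dots> \<le> (\<Sum>j\<in>Jk k. (xw \<phi> j)\<^sup>2) * (\<Sum>j\<in>Jk k. (?q j)\<^sup>2)"
    by (rule Cauchy_Schwarz_ineq_sum)
  also have "\<dots> \<le> X2 * N2 g"
  proof (unfold X2_def[symmetric], rule mult_left_mono[OF _ X2_nn])
    have "(\<Sum>j\<in>Jk k. (?q j)\<^sup>2) \<le> (\<Sum>j\<in>Jk k. ?q j)"
    proof (rule sum_mono)
      fix j have "?q j \<le> 1" using G_le1[OF g, of j] by (simp add: power_le_one)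
      then show "(?q j)\<^sup>2 \<le> ?q j" by (simp add: power2_eq_square mult_left_le)
    qed
    also have "\<dots> \<le> N2 g" by (rule fin_le_N2[OF g Jk_fin])
    finally show "(\<Sum>j\<in>Jk k. (?q j)\<^sup>2) \<le> N2 g" .
  qed
  finally show ?thesis .
qed

lemma partC: "(LINT z|(M01 \<Otimes>\<^sub>M M01). (Re (hk \<phi> g k (fst z) (snd z)))\<^sup>2 * g (fst z) * g (snd z))
   \<le> (2 * l2norm g * (nuk \<phi> k) ^ 2)\<^sup>2"
proof -
  have "(\<Sum>j\<in>Jk k. \<Sum>l\<in>Jk k. xw \<phi> j * xw \<phi> l * (cmod (Cov j l))\<^sup>2)
     \<le> (\<Sum>j\<in>Jk k. \<Sum>l\<in>Jk k. 2 * (xw \<phi> j * xw \<phi> l * (cmod (fcoef g (j - l)))\<^sup>2)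
         + 2 * (xw \<phi> j * xw \<phi> l * ((cmod (fcoef g j))\<^sup>2 * (cmod (fcoef g l))\<^sup>2)))"
  proof (intro sum_mono)
    fix j l
    have "xw \<phi> j * xw \<phi> l * (cmod (Cov j l))\<^sup>2 \<le> xw \<phi> j * xw \<phi> l *
       (2 * (cmod (fcoef g (j - l)))\<^sup>2 + 2 * ((cmod (fcoef g j))\<^sup>2 * (cmod (fcoef g l))\<^sup>2))"
      using xw_pos[of j] xw_pos[of l] by (intro mult_left_mono Cov_sq) auto
    then show "xw \<phi> j * xw \<phi> l * (cmod (Cov j l))\<^sup>2 \<le> 2 * (xw \<phi> j * xw \<phi> l * (cmod (fcoef g (j - l)))\<^sup>2)
         + 2 * (xw \<phi> j * xw \<phi> l * ((cmod (fcoef g j))\<^sup>2 * (cmod (fcoef g l))\<^sup>2))"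
      by (simp add: algebra_simps)
  qed
  also have "\<dots> = 2 * (\<Sum>j\<in>Jk k. \<Sum>l\<in>Jk k. xw \<phi> j * xw \<phi> l * (cmod (fcoef g (j - l)))\<^sup>2)
     + 2 * (\<Sum>j\<in>Jk k. \<Sum>l\<in>Jk k. xw \<phi> j * xw \<phi> l * ((cmod (fcoef g j))\<^sup>2 * (cmod (fcoef g l))\<^sup>2))"
    by (simp add: sum.distrib sum_distrib_left)
  also have "\<dots> \<le> 2 * (X2 * N2 g) + 2 * (X2 * N2 g)"
    using sumA sumB by linarith
  also have "\<dots> = (2 * l2norm g * (nuk \<phi> k) ^ 2)\<^sup>2"
    using N2_ge1[OF g] X2_nn by (simp add: l2norm_N2[OF g] nuk2 power_mult_distrib)
  finally show ?thesis by (simp add: partC_val)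
qed

end


lemma amgm2: fixes a b t :: real assumes t: "0 < t" shows "a * b \<le> (t * a\<^sup>2 + b\<^sup>2 / t) / 2"
proof -
  have "0 \<le> (t * a - b)\<^sup>2" by simp
  then have "2 * t * (a * b) \<le> t * (t * a\<^sup>2) + b\<^sup>2" by (simp add: power2_diff algebra_simps power2_eq_square)
  then show ?thesis using t by (simp add: field_simps power2_eq_square)
qed

context Sett
begin

lemma h_meas2[measurable]: "(\<lambda>z. hk \<phi> g k (fst z) (snd z)) \<in> borel_measurable (M01 \<Otimes>\<^sub>M M01)"
  unfolding h_alt by measurable

lemma one_Jk: "1 \<in> Jk k" using k by (simp add: Jk_def)

lemma X2_ge1: "1 \<le> X2"
proof -
  have "(xw \<phi> 1)\<^sup>2 \<le> X2" unfolding X2_def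
    by (rule member_le_sum[OF one_Jk]) (auto simp: Jk_fin)
  moreover have "1 \<le> (xw \<phi> 1)\<^sup>2" using xw_ge1[of 1] by (simp add: one_le_power)
  ultimately show ?thesis by simp
qed

lemma C_pos: "0 < 2 * l2norm g * (nuk \<phi> k) ^ 2"
  using N2_ge1[OF g] X2_ge1 by (simp add: l2norm_N2[OF g] nuk2)

lemma partD:
  assumes [measurable]: "\<zeta> \<in> borel_measurable M01" "\<xi> \<in> borel_measurable M01"
    and iz: "integrable M01 (\<lambda>y. (\<zeta> y)\<^sup>2 * g y)" and z1: "(LINT y|M01. (\<zeta> y)\<^sup>2 * g y) \<le> 1"
    and ix: "integrable M01 (\<lambda>y. (\<xi> y)\<^sup>2 * g y)" and x1: "(LINT y|M01. (\<xi> y)\<^sup>2 * g y) \<le> 1"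
  shows "(LINT z|(M01 \<Otimes>\<^sub>M M01). Re (hk \<phi> g k (fst z) (snd z)) * \<zeta> (fst z) * \<xi> (snd z)
                  * g (fst z) * g (snd z)) \<le> 2 * l2norm g * (nuk \<phi> k) ^ 2"
    (is "(LINT z|?M. ?F z) \<le> ?C")
proof (cases "integrable ?M ?F")
  case False
  then show ?thesis using C_pos by (simp add: not_integrable_integral_eq)
next
  case True
  note [measurable] = g_meas[OF g]
  define t where "t = 1 / ?C"
  have t: "0 < t" using C_pos by (simp add: t_def)
  let ?H = "\<lambda>z. (Re (hk \<phi> g k (fst z) (snd z)))\<^sup>2 * g (fst z) * g (snd z)"
  let ?Q = "\<lambda>z. ((\<zeta> (fst z))\<^sup>2 * g (fst z)) * ((\<xi> (snd z))\<^sup>2 * g (snd z))"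
  have iQ: "integrable ?M ?Q" by (rule prod_int(1)[OF iz ix])
  have "(LINT z|?M. ?F z) \<le> (LINT z|?M. (t * ?H z + ?Q z / t) / 2)"
  proof (rule integral_mono[OF True])
    show "integrable ?M (\<lambda>z. (t * ?H z + ?Q z / t) / 2)"
      using partC_int iQ by simp
    fix z assume "z \<in> space ?M"
    then have z: "fst z \<in> {0..<1}" "snd z \<in> {0..<1}" by (auto simp: space_pair_measure)
    have gg: "0 \<le> g (fst z) * g (snd z)" using g_nn[OF g z(1)] g_nn[OF g z(2)] by simp
    have "Re (hk \<phi> g k (fst z) (snd z)) * (\<zeta> (fst z) * \<xi> (snd z))
       \<le> (t * (Re (hk \<phi> g k (fst z) (snd z)))\<^sup>2 + (\<zeta> (fst z) * \<xi> (snd z))\<^sup>2 / t) / 2"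
      by (rule amgm2[OF t])
    from mult_right_mono[OF this gg]
    show "?F z \<le> (t * ?H z + ?Q z / t) / 2"
      by (simp add: algebra_simps power_mult_distrib add_divide_distrib)
  qed
  also have "\<dots> = (t * (LINT z|?M. ?H z) + (LINT z|?M. ?Q z) / t) / 2"
    using partC_int iQ by simp
  also have "(LINT z|?M. ?Q z) = (LINT y|M01. (\<zeta> y)\<^sup>2 * g y) * (LINT y|M01. (\<xi> y)\<^sup>2 * g y)"
    by (rule prod_int(2)[OF iz ix])
  also have "(t * (LINT z|?M. ?H z) + (LINT y|M01. (\<zeta> y)\<^sup>2 * g y) * (LINT y|M01. (\<xi> y)\<^sup>2 * g y) / t) / 2
      \<le> (t * ?C\<^sup>2 + 1 / t) / 2"
  proof -
    have a: "t * (LINT z|?M. ?H z) \<le> t * ?C\<^sup>2" using partC t by (intro mult_left_mono) auto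
    have n1: "0 \<le> (LINT y|M01. (\<zeta> y)\<^sup>2 * g y)" "0 \<le> (LINT y|M01. (\<xi> y)\<^sup>2 * g y)"
      by (auto intro!: integral_nonneg_AE AE_I2 simp: g_nn[OF g])
    have "(LINT y|M01. (\<zeta> y)\<^sup>2 * g y) * (LINT y|M01. (\<xi> y)\<^sup>2 * g y) \<le> 1 * 1"
      using z1 x1 n1 by (intro mult_mono) auto
    then have b: "(LINT y|M01. (\<zeta> y)\<^sup>2 * g y) * (LINT y|M01. (\<xi> y)\<^sup>2 * g y) / t \<le> 1 / t"
      using t by (simp add: divide_right_mono)
    show ?thesis by (rule divide_right_mono[OF add_mono[OF a b]]) simp
  qed
  also have "\<dots> = ?C" using C_pos by (simp add: t_def power2_eq_square)
  finally show ?thesis .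
qed

end


context Sett
begin

lemma zg_int:
  assumes [measurable]: "\<zeta> \<in> borel_measurable M01" and iz: "integrable M01 (\<lambda>y. (\<zeta> y)\<^sup>2 * g y)"
  shows "integrable M01 (\<lambda>y. \<zeta> y * g y)"
proof (rule Bochner_Integration.integrable_bound[where f="\<lambda>y. ((\<zeta> y)\<^sup>2 * g y + g y) / 2"])
  note [measurable] = g_meas[OF g]
  show "integrable M01 (\<lambda>y. ((\<zeta> y)\<^sup>2 * g y + g y) / 2)" using iz g_int[OF g] by simp
  show "(\<lambda>y. \<zeta> y * g y) \<in> borel_measurable M01" by measurable
  show "AE x in M01. norm (\<zeta> x * g x) \<le> norm (((\<zeta> x)\<^sup>2 * g x + g x) / 2)"
  proof (rule AE_I2)
    fix x assume "x \<in> space M01"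
    then have g0: "0 \<le> g x" using g_nn[OF g] by simp
    have "\<bar>\<zeta> x\<bar> * 1 \<le> (\<bar>\<zeta> x\<bar>\<^sup>2 + 1\<^sup>2) / 2" by (rule amgm)
    from mult_right_mono[OF this g0]
    have "\<bar>\<zeta> x\<bar> * g x \<le> ((\<zeta> x)\<^sup>2 * g x + g x) / 2" by (simp add: algebra_simps)
    then show "norm (\<zeta> x * g x) \<le> norm (((\<zeta> x)\<^sup>2 * g x + g x) / 2)"
      using g0 by (simp add: abs_mult)
  qed
qed

lemma int_aw:
  assumes "integrable M01 w"
  shows "integrable M01 (\<lambda>y. aa g j y * of_real (w y))"
    and "integrable M01 (\<lambda>y. cnj (aa g j y) * of_real (w y))"
  by (rule int_bdd_w[OF assms, where B=2]; auto simp: aa_bdd)+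

lemma Gabs_sym: "cmod (fcoef g (j - l)) = cmod (fcoef g (l - j))"
  using G_neg[OF g, of "l - j"] by simp

lemma Su:
  assumes [measurable]: "\<zeta> \<in> borel_measurable M01"
    and iz: "integrable M01 (\<lambda>y. (\<zeta> y)\<^sup>2 * g y)" and z1: "(LINT y|M01. (\<zeta> y)\<^sup>2 * g y) \<le> 1"
    and Lr: "\<And>j. j \<in> Jk k \<Longrightarrow> (\<Sum>l\<in>Jk k. cmod (fcoef g (j - l))) \<le> Lr"
    and m: "\<And>j. j \<in> Jk k \<Longrightarrow> xw \<phi> j \<le> m"
    and Lr0: "0 \<le> Lr"
  shows "(\<Sum>j\<in>Jk k. xw \<phi> j * (cmod (CLINT y|M01. aa g j y * of_real (\<zeta> y * g y)))\<^sup>2) \<le> Lr * m"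
proof -
  note [measurable] = g_meas[OF g]
  define u where "u j = (CLINT y|M01. aa g j y * of_real (\<zeta> y * g y))" for j
  define S where "S = (\<Sum>j\<in>Jk k. xw \<phi> j * (cmod (u j))\<^sup>2)"
  define c where "c = (\<lambda>j. of_real (xw \<phi> j) * cnj (u j))"
  define K where "K = (\<Sum>j\<in>Jk k. c j * fcoef g j)"
  have izg: "integrable M01 (\<lambda>y. \<zeta> y * g y)" by (rule zg_int) (use iz in auto)
  have S0: "0 \<le> S" unfolding S_def using xw_pos by (intro sum_nonneg mult_nonneg_nonneg) (auto intro: less_imp_le)
  have m0: "0 \<le> m" using m[OF one_Jk] xw_pos[of 1] by simp
  have "complex_of_real S = (\<Sum>j\<in>Jk k. c j * u j)"
    unfolding S_def c_def of_real_sum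
    by (intro sum.cong refl) (simp only: of_real_mult mcnj[symmetric], simp add: algebra_simps)
  also have "\<dots> = (CLINT y|M01. (\<Sum>j\<in>Jk k. c j * aa g j y) * of_real (\<zeta> y * g y))"
  proof -
    have iu: "integrable M01 (\<lambda>y. c j * (aa g j y * of_real (\<zeta> y * g y)))" for j
      by (intro integrable_mult_right int_aw(1)[OF izg])
    have "(CLINT y|M01. (\<Sum>j\<in>Jk k. c j * aa g j y) * of_real (\<zeta> y * g y))
       = (CLINT y|M01. \<Sum>j\<in>Jk k. c j * (aa g j y * of_real (\<zeta> y * g y)))"
      by (simp only: sum_distrib_right mult.assoc)
    also have "\<dots> = (\<Sum>j\<in>Jk k. CLINT y|M01. c j * (aa g j y * of_real (\<zeta> y * g y)))"
      by (rule Bochner_Integration.integral_sum[OF iu])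
    also have "\<dots> = (\<Sum>j\<in>Jk k. c j * u j)"
      by (simp only: integral_mult_right_zero u_def)
    finally show ?thesis by simp
  qed
  also have "\<dots> = (CLINT y|M01. (TP c (Jk k) y - K) * of_real (\<zeta> y * g y))"
    unfolding TP_def K_def aa_def by (simp add: sum_subtractf algebra_simps)
  finally have Seq: "complex_of_real S = (CLINT y|M01. (TP c (Jk k) y - K) * of_real (\<zeta> y * g y))" .
  have KK: "K = (CLINT y|M01. TP c (Jk k) y * of_real (g y))" unfolding K_def by (rule K_TP[symmetric])
  define V where "V = (LINT y|M01. (cmod (TP c (Jk k) y - K))\<^sup>2 * g y)"
  have V_le: "V \<le> (LINT y|M01. (cmod (TP c (Jk k) y))\<^sup>2 * g y)"
    unfolding V_def KK by (rule variance[OF g TP_meas TP_bdd])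
  also have "\<dots> \<le> (\<Sum>j\<in>Jk k. \<Sum>l\<in>Jk k. cmod (c j) * cmod (c l) * cmod (fcoef g (j - l)))"
    by (rule QFb[OF g Jk_fin])
  also have "\<dots> \<le> (\<Sum>j\<in>Jk k. \<Sum>l\<in>Jk k. ((cmod (c j))\<^sup>2 * cmod (fcoef g (j - l)) + (cmod (c l))\<^sup>2 * cmod (fcoef g (l - j))) / 2)"
  proof (intro sum_mono)
    fix j l
    have "cmod (c j) * cmod (c l) * cmod (fcoef g (j - l)) \<le> (((cmod (c j))\<^sup>2 + (cmod (c l))\<^sup>2) / 2) * cmod (fcoef g (j - l))"
      by (intro mult_right_mono amgm) simp
    then show "cmod (c j) * cmod (c l) * cmod (fcoef g (j - l)) \<le> ((cmod (c j))\<^sup>2 * cmod (fcoef g (j - l)) + (cmod (c l))\<^sup>2 * cmod (fcoef g (l - j))) / 2"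
      by (simp add: algebra_simps Gabs_sym[of j l])
  qed
  also have "\<dots> = ((\<Sum>j\<in>Jk k. (cmod (c j))\<^sup>2 * (\<Sum>l\<in>Jk k. cmod (fcoef g (j - l)))) + (\<Sum>l\<in>Jk k. (cmod (c l))\<^sup>2 * (\<Sum>j\<in>Jk k. cmod (fcoef g (l - j))))) / 2"
  proof -
    let ?G = "\<lambda>j l. cmod (fcoef g (j - l))"
    have e1: "(\<Sum>j\<in>Jk k. \<Sum>l\<in>Jk k. ((cmod (c j))\<^sup>2 * ?G j l + (cmod (c l))\<^sup>2 * ?G l j) / 2)
      = ((\<Sum>j\<in>Jk k. \<Sum>l\<in>Jk k. (cmod (c j))\<^sup>2 * ?G j l) + (\<Sum>j\<in>Jk k. \<Sum>l\<in>Jk k. (cmod (c l))\<^sup>2 * ?G l j)) / 2"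
      by (simp only: sum_divide_distrib[symmetric] sum.distrib)
    have e2: "(\<Sum>j\<in>Jk k. \<Sum>l\<in>Jk k. (cmod (c j))\<^sup>2 * ?G j l) = (\<Sum>j\<in>Jk k. (cmod (c j))\<^sup>2 * (\<Sum>l\<in>Jk k. ?G j l))"
      by (simp only: sum_distrib_left)
    have e3: "(\<Sum>j\<in>Jk k. \<Sum>l\<in>Jk k. (cmod (c l))\<^sup>2 * ?G l j) = (\<Sum>l\<in>Jk k. (cmod (c l))\<^sup>2 * (\<Sum>j\<in>Jk k. ?G l j))"
      by (subst sum.swap) (simp only: sum_distrib_left)
    show ?thesis unfolding e1 e2 e3 ..
  qed
  also have "\<dots> \<le> ((\<Sum>j\<in>Jk k. (cmod (c j))\<^sup>2 * Lr) + (\<Sum>l\<in>Jk k. (cmod (c l))\<^sup>2 * Lr)) / 2"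
    by (intro divide_right_mono add_mono sum_mono mult_left_mono Lr) auto
  also have "\<dots> = (\<Sum>j\<in>Jk k. (cmod (c j))\<^sup>2) * Lr" by (simp add: sum_distrib_right)
  also have "\<dots> \<le> (\<Sum>j\<in>Jk k. m * (xw \<phi> j * (cmod (u j))\<^sup>2)) * Lr"
  proof (intro mult_right_mono sum_mono Lr0)
    fix j assume j: "j \<in> Jk k"
    have "(cmod (c j))\<^sup>2 = xw \<phi> j * (xw \<phi> j * (cmod (u j))\<^sup>2)"
      using xw_pos[of j] by (simp add: c_def norm_mult power_mult_distrib power2_eq_square)
    also have "\<dots> \<le> m * (xw \<phi> j * (cmod (u j))\<^sup>2)"
      using m[OF j] xw_pos[of j] by (intro mult_right_mono) auto
    finally show "(cmod (c j))\<^sup>2 \<le> m * (xw \<phi> j * (cmod (u j))\<^sup>2)" .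
  qed
  also have "\<dots> = Lr * m * S" by (simp add: S_def sum_distrib_left algebra_simps)
  finally have V_S: "V \<le> Lr * m * S" .
  have "S \<le> Lr * m"
  proof (cases "S = 0")
    case True
    then show ?thesis using Lr0 m0 by simp
  next
    case False
    then have Sp: "0 < S" using S0 by simp
    define t where "t = 1 / S"
    have t: "0 < t" using Sp by (simp add: t_def)
    have iV: "integrable M01 (\<lambda>y. (cmod (TP c (Jk k) y - K))\<^sup>2 * g y)"
      by (rule int_bdd_g_real[OF g, where B="((\<Sum>j\<in>Jk k. cmod (c j)) + cmod K)^2"]) 
         (auto intro!: power_mono order_trans[OF norm_triangle_ineq4] TP_bdd)
    have "S \<le> cmod (CLINT y|M01. (TP c (Jk k) y - K) * of_real (\<zeta> y * g y))"
      by (metis Seq norm_of_real abs_ge_self)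
    also have "\<dots> \<le> (LINT y|M01. cmod ((TP c (Jk k) y - K) * of_real (\<zeta> y * g y)))"
      by (rule integral_norm_bound)
    also have "\<dots> \<le> (LINT y|M01. (t * ((cmod (TP c (Jk k) y - K))\<^sup>2 * g y) + ((\<zeta> y)\<^sup>2 * g y) / t) / 2)"
    proof (rule integral_mono)
      show "integrable M01 (\<lambda>y. cmod ((TP c (Jk k) y - K) * complex_of_real (\<zeta> y * g y)))"
      proof -
        have "integrable M01 (\<lambda>y. (TP c (Jk k) y - K) * complex_of_real (\<zeta> y * g y))"
          by (rule int_bdd_w[OF izg, where B="(\<Sum>j\<in>Jk k. cmod (c j)) + cmod K"])
             (auto intro!: order_trans[OF norm_triangle_ineq4] TP_bdd)
        then show ?thesis by (rule integrable_norm)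
      qed
      show "integrable M01 (\<lambda>y. (t * ((cmod (TP c (Jk k) y - K))\<^sup>2 * g y) + ((\<zeta> y)\<^sup>2 * g y) / t) / 2)"
        using iV iz by simp
      fix y assume "y \<in> space M01"
      then have g0: "0 \<le> g y" using g_nn[OF g] by simp
      have "cmod (TP c (Jk k) y - K) * \<bar>\<zeta> y\<bar> \<le> (t * (cmod (TP c (Jk k) y - K))\<^sup>2 + \<bar>\<zeta> y\<bar>\<^sup>2 / t) / 2"
        by (rule amgm2[OF t])
      from mult_right_mono[OF this g0]
      have "cmod (TP c (Jk k) y - K) * \<bar>\<zeta> y\<bar> * g y \<le> (t * ((cmod (TP c (Jk k) y - K))\<^sup>2 * g y) + ((\<zeta> y)\<^sup>2 * g y) / t) / 2"
        by (simp add: algebra_simps add_divide_distrib)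
      moreover have "cmod ((TP c (Jk k) y - K) * complex_of_real (\<zeta> y * g y)) = cmod (TP c (Jk k) y - K) * \<bar>\<zeta> y\<bar> * g y"
        by (simp only: norm_mult norm_of_real abs_mult abs_of_nonneg[OF g0] mult.assoc)
      ultimately show "cmod ((TP c (Jk k) y - K) * complex_of_real (\<zeta> y * g y)) \<le> (t * ((cmod (TP c (Jk k) y - K))\<^sup>2 * g y) + ((\<zeta> y)\<^sup>2 * g y) / t) / 2"
        by simp
    qed
    also have "\<dots> = (t * V + (LINT y|M01. (\<zeta> y)\<^sup>2 * g y) / t) / 2"
      using iV iz by (simp add: V_def)
    also have "\<dots> \<le> (t * (Lr * m * S) + 1 / t) / 2"
      using V_S z1 t by (intro divide_right_mono add_mono mult_left_mono) auto
    also have "\<dots> = (Lr * m + S) / 2" using Sp by (simp add: t_def)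
    finally show "S \<le> Lr * m" by simp
  qed
  then show ?thesis unfolding S_def u_def .
qed

end


context Sett
begin

lemma mk_pos: "0 < mk \<phi> k"
proof -
  have "1 / cmod (fcoef \<phi> 1) \<le> mk \<phi> k"
    unfolding mk_def by (rule Max_ge) (use k in auto)
  moreover have "0 < 1 / cmod (fcoef \<phi> 1)" using phi_pos[of 1] by simp
  ultimately show ?thesis by linarith
qed

lemma xw_le_mk: assumes j: "j \<in> Jk k" shows "xw \<phi> j \<le> (mk \<phi> k)\<^sup>2"
proof -
  have c: "cmod (fcoef \<phi> j) = cmod (fcoef \<phi> \<bar>j\<bar>)"
    by (cases "0 \<le> j") (auto simp: G_neg[OF phi, of "- j", simplified])
  have "\<bar>j\<bar> \<in> {1..int k}" using j by (auto simp: Jk_def)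
  then have "1 / cmod (fcoef \<phi> j) \<le> mk \<phi> k"
    unfolding mk_def c by (intro Max_ge) auto
  then have "(1 / cmod (fcoef \<phi> j))\<^sup>2 \<le> (mk \<phi> k)\<^sup>2"
    using phi_pos[of j] by (intro power_mono) auto
  then show ?thesis by (simp add: xw_def power_divide)
qed

lemma shift_L1:
  assumes L: "l1norm g = ennreal Lr" and Lr0: "0 \<le> Lr"
  shows "(\<Sum>l\<in>Jk k. cmod (fcoef g (j - l))) \<le> Lr"
proof -
  have "ennreal (\<Sum>l\<in>Jk k. cmod (fcoef g (j - l))) = (\<Sum>l\<in>Jk k. ennreal (cmod (fcoef g (j - l))))"
    by simp
  also have "\<dots> = (\<Sum>n\<in>(\<lambda>l. j - l) ` Jk k. ennreal (cmod (fcoef g n)))"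
    by (subst sum.reindex) (auto simp: inj_on_def)
  also have "\<dots> = (\<Sum>\<^sub>\<infinity>n\<in>(\<lambda>l. j - l) ` Jk k. ennreal (cmod (fcoef g n)))"
    by (simp add: Jk_fin)
  also have "\<dots> \<le> (\<Sum>\<^sub>\<infinity>n::int. ennreal (cmod (fcoef g n)))"
    by (rule infsum_mono_neutral) (auto intro!: nonneg_summable_on_complete)
  also have "\<dots> = ennreal Lr" using L by (simp add: l1norm_def)
  finally show ?thesis using Lr0 by simp
qed

lemma partL_val:
  assumes [measurable]: "\<zeta> \<in> borel_measurable M01" "\<xi> \<in> borel_measurable M01"
    and izg: "integrable M01 (\<lambda>y. \<zeta> y * g y)" and ixg: "integrable M01 (\<lambda>y. \<xi> y * g y)"
  shows "(LINT z|(M01 \<Otimes>\<^sub>M M01). Re (hk \<phi> g k (fst z) (snd z)) * \<zeta> (fst z) * \<xi> (snd z)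
                  * g (fst z) * g (snd z))
   = Re (\<Sum>j\<in>Jk k. of_real (xw \<phi> j) * (CLINT y|M01. aa g j y * of_real (\<zeta> y * g y))
                 * cnj (CLINT y|M01. aa g j y * of_real (\<xi> y * g y)))"
proof -
  let ?F = "\<lambda>z. Re (hk \<phi> g k (fst z) (snd z)) * \<zeta> (fst z) * \<xi> (snd z) * g (fst z) * g (snd z)"
  let ?T = "\<lambda>j z. of_real (xw \<phi> j) * ((aa g j (fst z) * of_real (\<zeta> (fst z) * g (fst z)))
              * (cnj (aa g j (snd z)) * of_real (\<xi> (snd z) * g (snd z))))"
  have it: "integrable (M01 \<Otimes>\<^sub>M M01) (?T j)" for j
    by (intro integrable_mult_right prod_int(1) int_aw[OF izg] int_aw[OF ixg])
  have pt: "complex_of_real (?F z) = (\<Sum>j\<in>Jk k. ?T j z)" for z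
  proof -
    have hr: "complex_of_real (Re (hk \<phi> g k (fst z) (snd z))) = hk \<phi> g k (fst z) (snd z)"
      using h_Im by (simp add: complex_eq_iff)
    have "complex_of_real (?F z) = hk \<phi> g k (fst z) (snd z) * (of_real (\<zeta> (fst z) * g (fst z)) * of_real (\<xi> (snd z) * g (snd z)))"
      by (simp only: of_real_mult hr mult_ac)
    also have "\<dots> = (\<Sum>j\<in>Jk k. ?T j z)"
      unfolding h_alt sum_distrib_right by (intro sum.cong refl) (simp add: mult_ac)
    finally show ?thesis .
  qed
  have i2: "(CLINT y|M01. cnj (aa g j y) * of_real (\<xi> y * g y)) = cnj (CLINT y|M01. aa g j y * of_real (\<xi> y * g y))" for j
  proof -
    have "(CLINT y|M01. cnj (aa g j y) * of_real (\<xi> y * g y)) = (CLINT y|M01. cnj (aa g j y * of_real (\<xi> y * g y)))"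
      by simp
    also have "\<dots> = cnj (CLINT y|M01. aa g j y * of_real (\<xi> y * g y))" by (rule Bochner_Integration.integral_cnj)
    finally show ?thesis .
  qed
  have "complex_of_real (LINT z|(M01 \<Otimes>\<^sub>M M01). ?F z) = (CLINT z|(M01 \<Otimes>\<^sub>M M01). complex_of_real (?F z))"
    by (rule integral_complex_of_real[symmetric])
  also have "\<dots> = (CLINT z|(M01 \<Otimes>\<^sub>M M01). \<Sum>j\<in>Jk k. ?T j z)" by (simp only: pt)
  also have "\<dots> = (\<Sum>j\<in>Jk k. CLINT z|(M01 \<Otimes>\<^sub>M M01). ?T j z)"
    by (rule Bochner_Integration.integral_sum[OF it])
  also have "\<dots> = (\<Sum>j\<in>Jk k. of_real (xw \<phi> j) * (CLINT y|M01. aa g j y * of_real (\<zeta> y * g y))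
                 * cnj (CLINT y|M01. aa g j y * of_real (\<xi> y * g y)))"
    unfolding integral_mult_right_zero prod_int(2)[OF int_aw(1)[OF izg] int_aw(2)[OF ixg]] i2
    by (simp add: mult.assoc)
  finally show ?thesis by (metis Re_complex_of_real)
qed

lemma partL:
  assumes [measurable]: "\<zeta> \<in> borel_measurable M01" "\<xi> \<in> borel_measurable M01"
    and iz: "integrable M01 (\<lambda>y. (\<zeta> y)\<^sup>2 * g y)" and z1: "(LINT y|M01. (\<zeta> y)\<^sup>2 * g y) \<le> 1"
    and ix: "integrable M01 (\<lambda>y. (\<xi> y)\<^sup>2 * g y)" and x1: "(LINT y|M01. (\<xi> y)\<^sup>2 * g y) \<le> 1"
  shows "ennreal (LINT z|(M01 \<Otimes>\<^sub>M M01). Re (hk \<phi> g k (fst z) (snd z)) * \<zeta> (fst z) * \<xi> (snd z)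
                  * g (fst z) * g (snd z))
              \<le> 4 * l1norm g * ennreal ((mk \<phi> k)\<^sup>2)"
proof (cases "l1norm g = top")
  case True
  have "0 < (mk \<phi> k)\<^sup>2" using mk_pos by simp
  then show ?thesis using True by (simp add: ennreal_top_mult)
next
  case False
  then obtain Lr where L: "l1norm g = ennreal Lr" and Lr0: "0 \<le> Lr"
    by (cases "l1norm g") auto
  define m where "m = (mk \<phi> k)\<^sup>2"
  have m0: "0 \<le> m" by (simp add: m_def)
  define u where "u j = (CLINT y|M01. aa g j y * of_real (\<zeta> y * g y))" for j
  define v where "v j = (CLINT y|M01. aa g j y * of_real (\<xi> y * g y))" for j
  have izg: "integrable M01 (\<lambda>y. \<zeta> y * g y)" by (rule zg_int) (use iz in auto)
  have ixg: "integrable M01 (\<lambda>y. \<xi> y * g y)" by (rule zg_int) (use ix in auto)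
  have Su_: "(\<Sum>j\<in>Jk k. xw \<phi> j * (cmod (u j))\<^sup>2) \<le> Lr * m"
    unfolding u_def m_def
    by (rule Su[OF _ iz z1]) (auto intro: shift_L1[OF L Lr0] xw_le_mk Lr0)
  have Sv_: "(\<Sum>j\<in>Jk k. xw \<phi> j * (cmod (v j))\<^sup>2) \<le> Lr * m"
    unfolding v_def m_def
    by (rule Su[OF _ ix x1]) (auto intro: shift_L1[OF L Lr0] xw_le_mk Lr0)
  have "(LINT z|(M01 \<Otimes>\<^sub>M M01). Re (hk \<phi> g k (fst z) (snd z)) * \<zeta> (fst z) * \<xi> (snd z)
                  * g (fst z) * g (snd z)) = Re (\<Sum>j\<in>Jk k. of_real (xw \<phi> j) * u j * cnj (v j))"
    unfolding u_def v_def by (rule partL_val[OF _ _ izg ixg]) auto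
  also have "\<dots> \<le> cmod (\<Sum>j\<in>Jk k. of_real (xw \<phi> j) * u j * cnj (v j))"
    by (rule complex_Re_le_cmod)
  also have "\<dots> \<le> (\<Sum>j\<in>Jk k. cmod (of_real (xw \<phi> j) * u j * cnj (v j)))"
    by (rule norm_sum)
  also have "\<dots> \<le> (\<Sum>j\<in>Jk k. (xw \<phi> j * (cmod (u j))\<^sup>2 + xw \<phi> j * (cmod (v j))\<^sup>2) / 2)"
  proof (rule sum_mono)
    fix j
    have "xw \<phi> j * (cmod (u j) * cmod (v j)) \<le> xw \<phi> j * (((cmod (u j))\<^sup>2 + (cmod (v j))\<^sup>2) / 2)"
      using xw_pos[of j] by (intro mult_left_mono amgm) auto
    then show "cmod (of_real (xw \<phi> j) * u j * cnj (v j)) \<le> (xw \<phi> j * (cmod (u j))\<^sup>2 + xw \<phi> j * (cmod (v j))\<^sup>2) / 2"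
      using xw_pos[of j] by (simp add: norm_mult algebra_simps add_divide_distrib)
  qed
  also have "\<dots> = ((\<Sum>j\<in>Jk k. xw \<phi> j * (cmod (u j))\<^sup>2) + (\<Sum>j\<in>Jk k. xw \<phi> j * (cmod (v j))\<^sup>2)) / 2"
    by (simp only: sum_divide_distrib[symmetric] sum.distrib)
  also have "\<dots> \<le> (Lr * m + Lr * m) / 2"
    by (rule divide_right_mono[OF add_mono[OF Su_ Sv_]]) simp
  also have "\<dots> \<le> 4 * Lr * m" using Lr0 m0 by (simp add: mult_nonneg_nonneg)
  finally have "ennreal (LINT z|(M01 \<Otimes>\<^sub>M M01). Re (hk \<phi> g k (fst z) (snd z)) * \<zeta> (fst z) * \<xi> (snd z)
                  * g (fst z) * g (snd z)) \<le> ennreal (4 * Lr * m)"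
    by (rule ennreal_leI)
  also have "\<dots> = 4 * l1norm g * ennreal ((mk \<phi> k)\<^sup>2)"
    using Lr0 m0 by (simp add: L m_def ennreal_mult)
  finally show ?thesis .
qed

end


context Sett
begin

lemma part4: "(CLINT y1|M01. hk \<phi> g k y1 y2 * complex_of_real (g y1)) = 0"
proof -
  define c where "c = (\<lambda>j. of_real (xw \<phi> j) * cnj (aa g j y2))"
  define K where "K = (CLINT y|M01. TP c (Jk k) y * of_real (g y))"
  have hK: "hk \<phi> g k y1 y2 = TP c (Jk k) y1 - K" for y1
    unfolding K_def K_TP c_def by (rule h_TP)
  have i1: "integrable M01 (\<lambda>y. TP c (Jk k) y * of_real (g y))"
    by (rule int_bdd_g[OF g TP_meas TP_bdd])
  have i2: "integrable M01 (\<lambda>y. complex_of_real (g y))" using g_int[OF g] by simp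
  have "(CLINT y1|M01. hk \<phi> g k y1 y2 * complex_of_real (g y1))
      = (CLINT y1|M01. TP c (Jk k) y1 * of_real (g y1) - K * of_real (g y1))"
    unfolding hK by (simp add: algebra_simps)
  also have "\<dots> = K - K * (CLINT y1|M01. complex_of_real (g y1))"
    using i1 i2 by (simp add: K_def)
  also have "(CLINT y1|M01. complex_of_real (g y1)) = 1" using g_one[OF g] by simp
  finally show ?thesis by simp
qed

lemma part5: "\<bar>Re (hk \<phi> g k y1 y2)\<bar> \<le> 4 * (nuk \<phi> k) ^ 4"
proof -
  have "\<bar>Re (hk \<phi> g k y1 y2)\<bar> \<le> cmod (hk \<phi> g k y1 y2)" by (rule abs_Re_le_cmod)
  also have "\<dots> \<le> 4 * (\<Sum>j\<in>Jk k. xw \<phi> j)" by (rule h_bdd)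
  also have "\<dots> \<le> 4 * X2" using sum_xw_le by simp
  finally show ?thesis by (simp add: X2_nuk)
qed

end

theorem lemmaA3:
  fixes \<phi> g :: "real \<Rightarrow> real" and k :: nat
  assumes phi: "dens \<phi>" and phi_nz: "\<forall>j. fcoef \<phi> j \<noteq> 0"
    and g: "dens g" and k: "1 \<le> k"
  defines "h \<equiv> hk \<phi> g k"
    and "A \<equiv> 4 * (nuk \<phi> k) ^ 4"
    and "B \<equiv> 3 * l2norm g * (nuk \<phi> k) ^ 3"
    and "C \<equiv> 2 * l2norm g * (nuk \<phi> k) ^ 2"
  shows
    "(\<forall>y1\<in>{0..<1}. \<forall>y2\<in>{0..<1}. Im (h y1 y2) = 0)
     \<and> (\<exists>M. \<forall>y1\<in>{0..<1}. \<forall>y2\<in>{0..<1}. cmod (h y1 y2) \<le> M)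
     \<and> (\<forall>y1\<in>{0..<1}. \<forall>y2\<in>{0..<1}. h y1 y2 = h y2 y1)
     \<and> (\<forall>y2\<in>{0..<1}. (LINT y1|M01. h y1 y2 * complex_of_real (g y1)) = 0)
     \<and> (\<forall>y1\<in>{0..<1}. \<forall>y2\<in>{0..<1}. \<bar>Re (h y1 y2)\<bar> \<le> A)
     \<and> (\<forall>y2\<in>{0..<1}. (LINT y1|M01. (Re (h y1 y2))\<^sup>2 * g y1) \<le> B\<^sup>2)
     \<and> (LINT z|(M01 \<Otimes>\<^sub>M M01). (Re (h (fst z) (snd z)))\<^sup>2 * g (fst z) * g (snd z)) \<le> C\<^sup>2
     \<and> (\<forall>\<zeta> \<xi>. \<zeta> \<in> borel_measurable M01 \<longrightarrow> \<xi> \<in> borel_measurable M01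
          \<longrightarrow> integrable M01 (\<lambda>y. (\<zeta> y)\<^sup>2 * g y) \<longrightarrow> (LINT y|M01. (\<zeta> y)\<^sup>2 * g y) \<le> 1
          \<longrightarrow> integrable M01 (\<lambda>y. (\<xi> y)\<^sup>2 * g y) \<longrightarrow> (LINT y|M01. (\<xi> y)\<^sup>2 * g y) \<le> 1
          \<longrightarrow> (LINT z|(M01 \<Otimes>\<^sub>M M01). Re (h (fst z) (snd z)) * \<zeta> (fst z) * \<xi> (snd z)
                  * g (fst z) * g (snd z)) \<le> C)
     \<and> (L2w g = L2w (\<lambda>_. 1) \<longrightarrow>
        (\<forall>\<zeta> \<xi>. \<zeta> \<in> borel_measurable M01 \<longrightarrow> \<xi> \<in> borel_measurable M01
          \<longrightarrow> integrable M01 (\<lambda>y. (\<zeta> y)\<^sup>2 * g y) \<longrightarrow> (LINT y|M01. (\<zeta> y)\<^sup>2 * g y) \<le> 1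
          \<longrightarrow> integrable M01 (\<lambda>y. (\<xi> y)\<^sup>2 * g y) \<longrightarrow> (LINT y|M01. (\<xi> y)\<^sup>2 * g y) \<le> 1
          \<longrightarrow> ennreal (LINT z|(M01 \<Otimes>\<^sub>M M01). Re (h (fst z) (snd z)) * \<zeta> (fst z) * \<xi> (snd z)
                  * g (fst z) * g (snd z))
              \<le> 4 * l1norm g * ennreal ((mk \<phi> k)\<^sup>2)))"
proof -
  interpret S: Sett \<phi> g k using phi phi_nz g k by (simp add: Sett_def)
  show ?thesis
    unfolding h_def A_def B_def C_def
    using S.h_Im S.h_swap S.part4 S.part5 S.partB S.partC
    by (intro conjI allI impI ballI exI[of _ "4 * (\<Sum>j\<in>Jk k. xw \<phi> j)"] S.h_bdd S.partD S.partL)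
       auto
qed


end
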